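(* Assume $\boldsymbol\Gamma$ is irreducible. Then the largest eigenvalue of $\boldsymbol\Theta-\boldsymbol\Psi$, denoted $-\mu$, is simple and admits a unit eigenvector $\mathbf W=(W_{jl})_{(j,l)\in\mathcal T_N}$ with all components strictly positive. Let $\mathbf S(z)=\exp\big((\boldsymbol\Theta-\boldsymbol\Psi)z\big)\mathbf S(0)$ with $\mathbf S(0)\in[0,\infty)^{\mathcal T_N}\setminus\{0\}$. Then, with $c_W=\sum_{(j,l)\in\mathcal T_N}W_{jl}S_{jl}(0)>0$, $$\mathbf S(z)=c_W\mathbf We^{-\mu z}\big(1+o(1)\big)\quad\text{as }z\to+\infty .$$ In particular, if $S_{jl}(0)=(2-\delta_{jl})q_jq_l$ for some $\mathbf q\in[0,\infty)^N\setminus\{0\}$ (the initial second moments $R_{jl}(0)=q_jq_l$), then $c_W=\sum_{j,l=0}^{N-1}W_{jl}q_jq_l$ (with $W_{jl}:=W_{lj}$ for $j>l$).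
   Context: Let $N\ge 2$. Let $\boldsymbol\Gamma=(\Gamma_{jl})_{j,l=0}^{N-1}$ be a real symmetric matrix with $\Gamma_{jl}\ge 0$ for $j\neq l$ and $\Gamma_{jj}=-\sum_{l\neq j}\Gamma_{jl}$. $\boldsymbol\Gamma$ is called irreducible if the graph on $\{0,\dots,N-1\}$ with an edge between $j\neq l$ whenever $\Gamma_{jl}>0$ is connected. Let $\Lambda_0,\dots,\Lambda_{N-1}\ge 0$. Let $\mathcal T_N=\{(j,l)\in\mathbb N^2:0\le j\le l\le N-1\}$. For $\mathbf S=(S_{jl})_{(j,l)\in\mathcal T_N}$ use the convention that $S_{jl}$ with $j>l$ means $S_{lj}$. Define linear maps on $\mathbb R^{\mathcal T_N}$ by $(\boldsymbol\Psi\mathbf S)_{jl}=(\Lambda_j+\Lambda_l)S_{jl}$ and $$(\boldsymbol\Theta\mathbf S)_{jl}=2\Gamma_{jl}\mathbf 1_{j\neq l}(S_{jj}+S_{ll}-2S_{jl})+\sum_{n\notin\{j,l\}}\big[\Gamma_{ln}(S_{jn}-S_{jl})+\Gamma_{jn}(S_{nl}-S_{jl})\big].$$ The vector $\mathbf S$ encodes second moments $R_{jl}=\mathbb E[P_jP_l]$ of mode powers via $S_{jl}=2R_{jl}$ for $j<l$ and $S_{jj}=R_{jj}$; $\mathbf S$ solves $\partial_z\mathbf S=(\boldsymbol\Theta-\boldsymbol\Psi)\mathbf S$. *)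

theory Defs
  imports "Jordan_Normal_Form.Char_Poly"
begin

definition TN :: "nat \<Rightarrow> (nat \<times> nat) set" where
  "TN N = {(j, l). j \<le> l \<and> l < N}"

text \<open>A fixed enumeration of T_N (used to turn vectors on T_N into matrices/vectors).\<close>
definition tn_list :: "nat \<Rightarrow> (nat \<times> nat) list" where
  "tn_list N = concat (map (\<lambda>l. map (\<lambda>j. (j, l)) [0..<Suc l]) [0..<N])"

definition sv :: "(nat \<times> nat \<Rightarrow> real) \<Rightarrow> nat \<Rightarrow> nat \<Rightarrow> real" where
  "sv S j l = (if j \<le> l then S (j, l) else S (l, j))"

definition Theta :: "nat \<Rightarrow> (nat \<Rightarrow> nat \<Rightarrow> real) \<Rightarrow> (nat \<times> nat \<Rightarrow> real) \<Rightarrow> (nat \<times> nat \<Rightarrow> real)" where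
  "Theta N \<Gamma> S = (\<lambda>(j, l).
     2 * \<Gamma> j l * (if j \<noteq> l then 1 else 0) * (sv S j j + sv S l l - 2 * sv S j l)
     + (\<Sum>n \<in> {0..<N} - {j, l}. \<Gamma> l n * (sv S j n - sv S j l) + \<Gamma> j n * (sv S n l - sv S j l)))"

definition Psi :: "(nat \<Rightarrow> real) \<Rightarrow> (nat \<times> nat \<Rightarrow> real) \<Rightarrow> (nat \<times> nat \<Rightarrow> real)" where
  "Psi \<Lambda> S = (\<lambda>(j, l). (\<Lambda> j + \<Lambda> l) * sv S j l)"

definition ThetaPsi :: "nat \<Rightarrow> (nat \<Rightarrow> nat \<Rightarrow> real) \<Rightarrow> (nat \<Rightarrow> real) \<Rightarrow> (nat \<times> nat \<Rightarrow> real) \<Rightarrow> (nat \<times> nat \<Rightarrow> real)" where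
  "ThetaPsi N \<Gamma> \<Lambda> S = (\<lambda>p. Theta N \<Gamma> S p - Psi \<Lambda> S p)"

definition ThetaPsi_mat :: "nat \<Rightarrow> (nat \<Rightarrow> nat \<Rightarrow> real) \<Rightarrow> (nat \<Rightarrow> real) \<Rightarrow> real mat" where
  "ThetaPsi_mat N \<Gamma> \<Lambda> = (let ts = tn_list N; n = length ts in
     mat n n (\<lambda>(a, b). ThetaPsi N \<Gamma> \<Lambda> (\<lambda>p. if p = ts ! b then 1 else 0) (ts ! a)))"

definition vec_of_TN :: "nat \<Rightarrow> (nat \<times> nat \<Rightarrow> real) \<Rightarrow> real vec" where
  "vec_of_TN N S = vec (length (tn_list N)) (\<lambda>i. S (tn_list N ! i))"

definition mexp_apply :: "real mat \<Rightarrow> real \<Rightarrow> real vec \<Rightarrow> real vec" where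
  "mexp_apply A z v = vec (dim_row A) (\<lambda>i. \<Sum>k. z ^ k / fact k * ((A ^\<^sub>m k) *\<^sub>v v) $ i)"

definition irreducible_Gamma :: "nat \<Rightarrow> (nat \<Rightarrow> nat \<Rightarrow> real) \<Rightarrow> bool" where
  "irreducible_Gamma N \<Gamma> = (\<forall>j<N. \<forall>l<N.
     (j, l) \<in> {(a, b). a < N \<and> b < N \<and> a \<noteq> b \<and> \<Gamma> a b > 0}\<^sup>*)"

end

theory Submission
  imports Defs
begin

lemma sym_eigvec:
  fixes a :: "nat \<Rightarrow> nat \<Rightarrow> real"
  assumes n: "0 < n" and sym: "\<And>i j. i < n \<Longrightarrow> j < n \<Longrightarrow> a i j = a j i"
  shows "\<exists>v l. (\<Sum>i<n. (v i)\<^sup>2) = 1 \<and> (\<forall>i<n. (\<Sum>j<n. a i j * v j) = l * v i)"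
proof -
  define M where "M = mat n n (\<lambda>(i,j). complex_of_real (a i j))"
  have M: "M \<in> carrier_mat n n" unfolding M_def by simp
  obtain as where cp: "char_poly M = (\<Prod> a \<leftarrow> as. [:- a, 1:])" and len: "length as = n"
    using char_poly_factorized[OF M] by blast
  define e where "e = as ! 0"
  have "e \<in> set as" using len n unfolding e_def by auto
  hence "poly (char_poly M) e = 0" unfolding cp
    by (induct as) (auto simp: poly_prod_list)
  hence "eigenvalue M e" using eigenvalue_root_char_poly[OF M] by simp
  then obtain z where z: "z \<in> carrier_vec n" "z \<noteq> 0\<^sub>v n" "M *\<^sub>v z = e \<cdot>\<^sub>v z"
    unfolding eigenvalue_def eigenvector_def using M by auto
  define zz where "zz i = z $ i" for i
  have eq: "(\<Sum>j<n. complex_of_real (a i j) * zz j) = e * zz i" if i: "i < n" for i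
  proof -
    have "(M *\<^sub>v z) $ i = e * zz i" using z(3) z(1) i by (simp add: zz_def)
    moreover have "(M *\<^sub>v z) $ i = (\<Sum>j<n. complex_of_real (a i j) * zz j)"
      using i z(1) by (simp add: M_def scalar_prod_def zz_def lessThan_atLeast0)
    ultimately show ?thesis by simp
  qed
  obtain i0 where i0: "i0 < n" "zz i0 \<noteq> 0"
    using z(1,2) unfolding zz_def by (metis carrier_vecD eq_vecI index_zero_vec(1) index_zero_vec(2))
  define Q where "Q = (\<Sum>i<n. cnj (zz i) * (\<Sum>j<n. complex_of_real (a i j) * zz j))"
  define s where "s = (\<Sum>i<n. (cmod (zz i))\<^sup>2)"
  have s_pos: "s > 0" unfolding s_def
    by (rule sum_pos2[of _ i0]) (use i0 in auto)
  have Q1: "Q = e * complex_of_real s"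
  proof -
    have "Q = (\<Sum>i<n. e * (cnj (zz i) * zz i))" unfolding Q_def
      by (rule sum.cong) (auto simp: eq)
    also have "\<dots> = e * (\<Sum>i<n. cnj (zz i) * zz i)" by (simp add: sum_distrib_left)
    also have "(\<Sum>i<n. cnj (zz i) * zz i) = (\<Sum>i<n. complex_of_real ((cmod (zz i))\<^sup>2))"
      by (rule sum.cong[OF refl]) (metis complex_norm_square mult.commute)
    also have "\<dots> = complex_of_real s" unfolding s_def of_real_sum ..
    finally show ?thesis .
  qed
  have "cnj Q = (\<Sum>i<n. \<Sum>j<n. zz i * (complex_of_real (a i j) * cnj (zz j)))"
    unfolding Q_def by (simp add: sum_distrib_left)
  also have "\<dots> = (\<Sum>j<n. \<Sum>i<n. zz i * (complex_of_real (a i j) * cnj (zz j)))"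
    by (rule sum.swap)
  also have "\<dots> = Q" unfolding Q_def sum_distrib_left
    by (intro sum.cong refl) (auto simp: sym mult_ac)
  finally have "cnj Q = Q" .
  hence "Im Q = 0" by (metis cnj.simps(2) complex.expand neg_equal_zero)
  hence Ime: "Im e = 0" using s_pos unfolding Q1 by simp
  define x where "x i = Re (zz i)" for i
  define y where "y i = Im (zz i)" for i
  have ex: "(\<Sum>j<n. a i j * x j) = Re e * x i" and ey: "(\<Sum>j<n. a i j * y j) = Re e * y i"
    if "i < n" for i
  proof -
    have "Re (\<Sum>j<n. complex_of_real (a i j) * zz j) = Re (e * zz i)" using eq[OF that] by simp
    thus "(\<Sum>j<n. a i j * x j) = Re e * x i" using Ime by (simp add: x_def Re_sum)
    have "Im (\<Sum>j<n. complex_of_real (a i j) * zz j) = Im (e * zz i)" using eq[OF that] by simp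
    thus "(\<Sum>j<n. a i j * y j) = Re e * y i" using Ime by (simp add: y_def Im_sum)
  qed
  have "\<exists>t. (\<exists>i<n. t i \<noteq> 0) \<and> (\<forall>i<n. (\<Sum>j<n. a i j * t j) = Re e * t i)"
  proof (cases "x i0 = 0")
    case True
    hence "y i0 \<noteq> 0" using i0 unfolding x_def y_def using complex_eqI by force
    then show ?thesis using ey i0 by blast
  next
    case False
    then show ?thesis using ex i0 by blast
  qed
  then obtain t where t: "\<exists>i<n. t i \<noteq> 0" "\<forall>i<n. (\<Sum>j<n. a i j * t j) = Re e * t i" by blast
  define r where "r = (\<Sum>i<n. (t i)\<^sup>2)"
  have r: "r > 0" unfolding r_def using t(1) by (metis sum_pos2 finite_lessThan lessThan_iff zero_le_power2 zero_less_power2)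
  define v where "v i = t i / sqrt r" for i
  have "(\<Sum>i<n. (v i)\<^sup>2) = (\<Sum>i<n. (t i)\<^sup>2 / r)" unfolding v_def using r
    by (simp add: power_divide)
  also have "\<dots> = 1" using r unfolding r_def[symmetric] sum_divide_distrib[symmetric] by simp
  finally have v1: "(\<Sum>i<n. (v i)\<^sup>2) = 1" .
  have "\<forall>i<n. (\<Sum>j<n. a i j * v j) = Re e * v i"
  proof (intro allI impI)
    fix i assume i: "i < n"
    have "(\<Sum>j<n. a i j * v j) = (\<Sum>j<n. a i j * t j) / sqrt r"
      unfolding v_def sum_divide_distrib by simp
    also have "\<dots> = Re e * v i" using t(2) i unfolding v_def by simp
    finally show "(\<Sum>j<n. a i j * v j) = Re e * v i" .
  qed
  with v1 show ?thesis by blast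
qed


definition mm :: "nat \<Rightarrow> (nat \<Rightarrow> nat \<Rightarrow> real) \<Rightarrow> (nat \<Rightarrow> nat \<Rightarrow> real) \<Rightarrow> nat \<Rightarrow> nat \<Rightarrow> real"
  where "mm n X Y = (\<lambda>i j. \<Sum>k<n. X i k * Y k j)"
definition tr :: "(nat \<Rightarrow> nat \<Rightarrow> real) \<Rightarrow> nat \<Rightarrow> nat \<Rightarrow> real" where "tr X = (\<lambda>i j. X j i)"
definition idm :: "nat \<Rightarrow> nat \<Rightarrow> real" where "idm = (\<lambda>i j. if i = j then 1 else 0)"
definition dg :: "(nat \<Rightarrow> real) \<Rightarrow> nat \<Rightarrow> nat \<Rightarrow> real" where "dg es = (\<lambda>i j. if i = j then es i else 0)"
definition eqn :: "nat \<Rightarrow> (nat \<Rightarrow> nat \<Rightarrow> real) \<Rightarrow> (nat \<Rightarrow> nat \<Rightarrow> real) \<Rightarrow> bool"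
  where "eqn n X Y = (\<forall>i<n. \<forall>j<n. X i j = Y i j)"

lemma mm_assoc: "mm n (mm n X Y) Z = mm n X (mm n Y Z)"
  unfolding mm_def by (auto simp: sum_distrib_left sum_distrib_right mult.assoc intro!: ext sum.swap)

lemma tr_mm: "tr (mm n X Y) = mm n (tr Y) (tr X)"
  unfolding mm_def tr_def by (auto simp: mult.commute intro!: ext)

lemma tr_tr[simp]: "tr (tr X) = X" unfolding tr_def by simp

lemma eqn_refl[simp]: "eqn n X X" unfolding eqn_def by simp
lemma eqn_sym: "eqn n X Y \<Longrightarrow> eqn n Y X" unfolding eqn_def by simp
lemma eqn_trans: "eqn n X Y \<Longrightarrow> eqn n Y Z \<Longrightarrow> eqn n X Z" unfolding eqn_def by simp
lemma eqn_mm: "eqn n X X' \<Longrightarrow> eqn n Y Y' \<Longrightarrow> eqn n (mm n X Y) (mm n X' Y')"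
  unfolding eqn_def mm_def by (auto intro!: sum.cong)
lemma eqn_tr: "eqn n X Y \<Longrightarrow> eqn n (tr X) (tr Y)" unfolding eqn_def tr_def by simp

lemma if01_mult[simp]: "(if P then 1 else 0) * (x::real) = (if P then x else 0)" by simp
lemma mult_if01[simp]: "(x::real) * (if P then 1 else 0) = (if P then x else 0)" by simp

lemma mm_idm_right: "eqn n (mm n X idm) X"
  unfolding eqn_def mm_def idm_def by (auto simp: sum.delta')
lemma mm_idm_left: "eqn n (mm n idm X) X"
  unfolding eqn_def mm_def idm_def by (auto simp: sum.delta)
lemma mm_dg: "mm n X (dg es) i j = (if j < n then X i j * es j else 0)"
  unfolding mm_def dg_def by (auto simp: if_distrib sum.delta' cong: if_cong)

lemma householder:
  fixes v :: "nat \<Rightarrow> real"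
  assumes v1: "(\<Sum>i<n. (v i)\<^sup>2) = 1" and n: "0 < n"
  shows "\<exists>H. tr H = H \<and> eqn n (mm n H H) idm \<and> (\<forall>i<n. H i 0 = v i)"
proof -
  define w where "w i = v i - (if i = 0 then 1 else 0)" for i
  define q where "q = (\<Sum>i<n. (w i)\<^sup>2)"
  define c where "c = 2 / q"
  define H where "H i j = (if i = j then 1 else 0) - c * w i * w j" for i j
  have q: "q = 2 - 2 * v 0"
  proof -
    have "q = (\<Sum>i<n. (v i)\<^sup>2 - 2 * (if i = 0 then v i else 0) + (if i = 0 then 1 else 0))"
      unfolding q_def w_def by (intro sum.cong) (auto simp: power2_eq_square algebra_simps)
    also have "\<dots> = 2 - 2 * v 0" using n v1 by (simp add: sum.distrib sum_subtractf sum_distrib_left[symmetric] sum.delta)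
    finally show ?thesis .
  qed
  have sym: "tr H = H" unfolding tr_def H_def by (auto intro!: ext)
  have cq: "c * c * q = 2 * c" unfolding c_def by (cases "q = 0") (auto simp: field_simps power2_eq_square)
  have orth: "eqn n (mm n H H) idm" unfolding eqn_def
  proof (intro allI impI)
    fix i j assume i: "i < n" and j: "j < n"
    have "mm n H H i j = (\<Sum>k<n. (if i = k then 1 else 0) * (if k = j then 1 else 0)
       - (if i = k then 1 else 0) * (c * w k * w j) - (c * w i * w k) * (if k = j then 1 else 0)
       + c * c * w i * w j * (w k)\<^sup>2)"
      unfolding mm_def H_def by (intro sum.cong) (auto simp: algebra_simps power2_eq_square)
    also have "\<dots> = (if i = j then 1 else 0) - c * w i * w j - c * w i * w j + c * c * w i * w j * q"
    proof -
      have e1: "(\<Sum>k<n. (if i = k then 1 else 0) * (if k = j then (1::real) else 0)) = (if i = j then 1 else 0)"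
        using i j by (simp add: sum.delta)
      have e2: "(\<Sum>k<n. (if i = k then 1 else 0) * (c * w k * w j)) = c * w i * w j"
        using i by (simp add: sum.delta)
      have e3: "(\<Sum>k<n. (c * w i * w k) * (if k = j then 1 else 0)) = c * w i * w j"
        using j by (simp add: sum.delta')
      have e4: "(\<Sum>k<n. c * c * w i * w j * (w k)\<^sup>2) = c * c * w i * w j * q"
        unfolding q_def by (simp add: sum_distrib_left)
      show ?thesis unfolding sum.distrib sum_subtractf e1 e2 e3 e4 ..
    qed
    also have "\<dots> = idm i j" unfolding idm_def
    proof -
      have "c * c * w i * w j * q = 2 * c * w i * w j" using cq by (metis mult.commute mult.left_commute)
      thus "(if i = j then 1 else 0) - c * w i * w j - c * w i * w j + c * c * w i * w j * q = (if i = j then 1 else 0)" by simp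
    qed
    finally show "mm n H H i j = idm i j" .
  qed
  have col: "H i 0 = v i" if i: "i < n" for i
  proof (cases "q = 0")
    case True
    hence "\<forall>k\<in>{..<n}. (w k)\<^sup>2 = 0" unfolding q_def
      by (subst sum_nonneg_eq_0_iff[symmetric]) auto
    hence "w i = 0" using i by auto
    then show ?thesis using True unfolding H_def c_def w_def by auto
  next
    case False
    have "w 0 = - q / 2" using q unfolding w_def by simp
    hence "c * w 0 = -1" using False unfolding c_def by simp
    hence "H i 0 = (if i = 0 then 1 else 0) + w i" unfolding H_def
      by (metis (no_types, opaque_lifting) diff_minus_eq_add mult.commute mult.left_commute mult_minus1)
    then show ?thesis unfolding w_def by simp
  qed
  show ?thesis using sym orth col by blast
qed


lemma eqn_mm_left: "eqn n Y Y' \<Longrightarrow> eqn n (mm n X Y) (mm n X Y')"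
  by (rule eqn_mm) auto
lemma eqn_mm_right: "eqn n X X' \<Longrightarrow> eqn n (mm n X Y) (mm n X' Y)"
  by (rule eqn_mm) auto
lemma mm_cancel: "eqn n (mm n H H) idm \<Longrightarrow> eqn n (mm n H (mm n H X)) X"
  unfolding mm_assoc[symmetric] by (rule eqn_trans[OF eqn_mm_right mm_idm_left])

lemma eqnD: "eqn n X Y \<Longrightarrow> i < n \<Longrightarrow> j < n \<Longrightarrow> X i j = Y i j" unfolding eqn_def by auto

lemma spectral:
  "(\<forall>i<n. \<forall>j<n. a i j = a j i) \<Longrightarrow>
   \<exists>U es. eqn n (mm n (tr U) U) idm \<and> eqn n (mm n a U) (mm n U (dg es))"
proof (induction n arbitrary: a)
  case 0
  then show ?case unfolding eqn_def by auto
next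
  case (Suc m)
  define n where "n = Suc m"
  have symA: "a i j = a j i" if "i < n" "j < n" for i j using Suc.prems that unfolding n_def by auto
  obtain v l where v1: "(\<Sum>i<n. (v i)\<^sup>2) = 1" and ev: "\<forall>i<n. (\<Sum>j<n. a i j * v j) = l * v i"
    using sym_eigvec[of n a] symA unfolding n_def by auto
  obtain H where Hs: "tr H = H" and HH: "eqn n (mm n H H) idm" and H0: "\<forall>i<n. H i 0 = v i"
    using householder[OF v1] unfolding n_def by auto
  have Hsym: "H i j = H j i" for i j using Hs unfolding tr_def by metis
  define C where "C = mm n (mm n H a) H"
  have trA: "eqn n (tr a) a" unfolding eqn_def tr_def using symA by auto
  have Csym: "eqn n (tr C) C"
  proof -
    have "tr C = mm n H (mm n (tr a) H)" unfolding C_def tr_mm Hs mm_assoc ..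
    moreover have "C = mm n H (mm n a H)" unfolding C_def mm_assoc ..
    ultimately show ?thesis using eqn_mm_left[OF eqn_mm_right[OF trA]] by simp
  qed
  have C0: "C r 0 = (if r = 0 then l else 0)" if r: "r < n" for r
  proof -
    have "C r 0 = (\<Sum>k<n. H r k * (\<Sum>j<n. a k j * H j 0))"
      unfolding C_def mm_assoc by (simp add: mm_def)
    also have "\<dots> = (\<Sum>k<n. H r k * (l * H k 0))"
      by (intro sum.cong refl) (use ev H0 in auto)
    also have "\<dots> = l * mm n H H r 0" unfolding mm_def by (simp add: sum_distrib_left mult_ac)
    also have "\<dots> = l * idm r 0" using eqnD[OF HH r] unfolding n_def by simp
    finally show ?thesis unfolding idm_def by simp
  qed
  define a' where "a' i j = C (Suc i) (Suc j)" for i j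
  have "\<forall>i<m. \<forall>j<m. a' i j = a' j i"
    unfolding a'_def using Csym unfolding eqn_def tr_def n_def by auto
  from Suc.IH[OF this] obtain U' es' where
    IHo: "eqn m (mm m (tr U') U') idm" and IHe: "eqn m (mm m a' U') (mm m U' (dg es'))" by blast
  define V where "V p j = (if p = 0 then (if j = 0 then 1 else 0) else if j = 0 then 0 else U' (p-1) (j-1))" for p j
  define es where "es j = (if j = 0 then l else es' (j - 1))" for j
  have B1: "eqn n (mm n (tr V) V) idm" unfolding eqn_def
  proof (intro allI impI)
    fix i j assume i: "i < n" and j: "j < n"
    have "mm n (tr V) V i j = V 0 i * V 0 j + (\<Sum>p<m. V (Suc p) i * V (Suc p) j)"
      unfolding mm_def tr_def n_def sum.lessThan_Suc_shift by simp
    also have "\<dots> = idm i j"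
    proof (cases i)
      case 0
      then show ?thesis unfolding V_def idm_def by auto
    next
      case (Suc i')
      show ?thesis
      proof (cases j)
        case 0
        then show ?thesis using Suc unfolding V_def idm_def by auto
      next
        case (Suc j')
        have "(\<Sum>p<m. V (Suc p) i * V (Suc p) j) = mm m (tr U') U' i' j'"
          unfolding mm_def tr_def V_def using Suc \<open>i = Suc i'\<close> by simp
        also have "\<dots> = idm i' j'" using eqnD[OF IHo] i j Suc \<open>i = Suc i'\<close> unfolding n_def by auto
        finally show ?thesis using Suc \<open>i = Suc i'\<close> unfolding V_def idm_def by auto
      qed
    qed
    finally show "mm n (tr V) V i j = idm i j" .
  qed
  have B2: "eqn n (mm n C V) (mm n V (dg es))" unfolding eqn_def
  proof (intro allI impI)
    fix r k assume r: "r < n" and k: "k < n"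
    have "mm n C V r k = C r 0 * V 0 k + (\<Sum>s<m. C r (Suc s) * V (Suc s) k)"
      unfolding mm_def n_def sum.lessThan_Suc_shift by simp
    also have "\<dots> = V r k * es k"
    proof (cases k)
      case 0
      then show ?thesis using C0[OF r] unfolding V_def es_def by auto
    next
      case (Suc k')
      show ?thesis
      proof (cases r)
        case 0
        have "C 0 (Suc s) = 0" if "s < m" for s
        proof -
          have "C 0 (Suc s) = C (Suc s) 0" using eqnD[OF Csym, of "Suc s" 0] that unfolding n_def tr_def by simp
          thus ?thesis using C0[of "Suc s"] that unfolding n_def by simp
        qed
        then show ?thesis using 0 Suc unfolding V_def by simp
      next
        case (Suc r')
        have "(\<Sum>s<m. C r (Suc s) * V (Suc s) k) = mm m a' U' r' k'"
          unfolding mm_def a'_def V_def using Suc \<open>k = Suc k'\<close> by simp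
        also have "\<dots> = U' r' k' * es' k'" using eqnD[OF IHe, of r' k'] r k Suc \<open>k = Suc k'\<close>
          unfolding n_def mm_dg by auto
        finally show ?thesis using Suc \<open>k = Suc k'\<close> unfolding V_def es_def by simp
      qed
    qed
    also have "\<dots> = mm n V (dg es) r k" using k unfolding mm_dg by simp
    finally show "mm n C V r k = mm n V (dg es) r k" .
  qed
  define U where "U = mm n H V"
  have orth: "eqn n (mm n (tr U) U) idm"
  proof -
    have "mm n (tr U) U = mm n (tr V) (mm n H (mm n H V))" unfolding U_def tr_mm Hs mm_assoc ..
    thus ?thesis using eqn_trans[OF eqn_mm_left[OF mm_cancel[OF HH]] B1] by simp
  qed
  have aR: "eqn n a (mm n H (mm n C H))"
  proof -
    have "mm n H (mm n C H) = mm n H (mm n H (mm n a (mm n H H)))" unfolding C_def mm_assoc ..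
    moreover have "eqn n (mm n H (mm n H (mm n a (mm n H H)))) a"
      by (rule eqn_trans[OF mm_cancel[OF HH]]) (rule eqn_trans[OF eqn_mm_left[OF HH] mm_idm_right])
    ultimately show ?thesis by (simp add: eqn_sym)
  qed
  have eig: "eqn n (mm n a U) (mm n U (dg es))"
  proof -
    have "eqn n (mm n a U) (mm n (mm n H (mm n C H)) U)" by (rule eqn_mm_right[OF aR])
    moreover have "mm n (mm n H (mm n C H)) U = mm n H (mm n C (mm n H (mm n H V)))"
      unfolding U_def mm_assoc ..
    moreover have "eqn n (mm n H (mm n C (mm n H (mm n H V)))) (mm n H (mm n V (dg es)))"
      by (rule eqn_mm_left, rule eqn_trans[OF eqn_mm_left[OF mm_cancel[OF HH]] B2])
    moreover have "mm n H (mm n V (dg es)) = mm n U (dg es)" unfolding U_def mm_assoc ..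
    ultimately show ?thesis using eqn_trans by metis
  qed
  show ?case using orth eig unfolding n_def by blast
qed


definition fm :: "nat \<Rightarrow> (nat \<Rightarrow> nat \<Rightarrow> real) \<Rightarrow> real mat" where
  "fm n X = mat n n (\<lambda>(i,j). X i j)"

lemma fm_carrier[simp]: "fm n X \<in> carrier_mat n n" unfolding fm_def by simp

lemma fm_mm: "fm n (mm n X Y) = fm n X * fm n Y"
  unfolding fm_def mm_def
  by (rule eq_matI) (auto simp: scalar_prod_def row_def col_def lessThan_atLeast0)

lemma fm_idm: "fm n idm = 1\<^sub>m n"
  unfolding fm_def idm_def by (rule eq_matI) auto

lemma fm_eq: "eqn n X Y \<longleftrightarrow> fm n X = fm n Y"
proof
  assume "eqn n X Y" thus "fm n X = fm n Y" unfolding fm_def eqn_def by (intro eq_matI) auto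
next
  assume e: "fm n X = fm n Y"
  show "eqn n X Y" unfolding eqn_def
  proof (intro allI impI)
    fix i j assume "i < n" "j < n"
    hence "fm n X $$ (i,j) = X i j" "fm n Y $$ (i,j) = Y i j" unfolding fm_def by auto
    thus "X i j = Y i j" using e by simp
  qed
qed

lemma orth_complete: assumes "eqn n (mm n (tr U) U) idm" shows "eqn n (mm n U (tr U)) idm"
proof -
  have "fm n (tr U) * fm n U = 1\<^sub>m n" using assms unfolding fm_eq fm_mm fm_idm .
  hence "fm n U * fm n (tr U) = 1\<^sub>m n" by (rule mat_mult_left_right_inverse[rotated 2]) auto
  thus ?thesis unfolding fm_eq fm_mm fm_idm .
qed

locale symmetzler =
  fixes n :: nat and a :: "nat \<Rightarrow> nat \<Rightarrow> real"
  assumes npos: "0 < n"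
    and sym: "\<And>i j. i < n \<Longrightarrow> j < n \<Longrightarrow> a i j = a j i"
    and metz: "\<And>i j. i < n \<Longrightarrow> j < n \<Longrightarrow> i \<noteq> j \<Longrightarrow> 0 \<le> a i j"
    and irr: "\<And>i j. i < n \<Longrightarrow> j < n \<Longrightarrow> (i, j) \<in> {(i,j). i < n \<and> j < n \<and> i \<noteq> j \<and> 0 < a i j}\<^sup>*"
begin

lemma zero_prop:
  assumes nn: "\<And>i. i < n \<Longrightarrow> 0 \<le> y i"
    and ev: "\<And>i. i < n \<Longrightarrow> (\<Sum>j<n. a i j * y j) = l * y i"
    and i0: "i0 < n" "y i0 = 0" and j: "j < n"
  shows "y j = 0"
proof -
  have stepz: "y k = 0" if e: "(i, k) \<in> {(i,j). i < n \<and> j < n \<and> i \<noteq> j \<and> 0 < a i j}" and yi: "y i = 0" for i k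
  proof -
    from e have i: "i < n" and k: "k < n" and ik: "i \<noteq> k" and aik: "0 < a i k" by auto
    have "(\<Sum>j<n. a i j * y j) = 0" using ev[OF i] yi by simp
    moreover have "\<forall>j\<in>{..<n}. 0 \<le> a i j * y j"
    proof
      fix j assume "j \<in> {..<n}"
      thus "0 \<le> a i j * y j" using metz[OF i, of j] nn[of j] yi by (cases "i = j") auto
    qed
    ultimately have "\<forall>j\<in>{..<n}. a i j * y j = 0" using sum_nonneg_eq_0_iff[of "{..<n}" "\<lambda>j. a i j * y j"] by auto
    hence "a i k * y k = 0" using k by auto
    thus ?thesis using aik by simp
  qed
  from irr[OF i0(1) j] show ?thesis
  proof (induction rule: rtrancl_induct)
    case base then show ?case using i0 by simp
  next
    case (step b c) then show ?case using stepz by blast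
  qed
qed

lemma unique_vec:
  assumes wpos: "\<And>i. i < n \<Longrightarrow> 0 < w i"
    and ew: "\<And>i. i < n \<Longrightarrow> (\<Sum>j<n. a i j * w j) = l * w i"
    and ey: "\<And>i. i < n \<Longrightarrow> (\<Sum>j<n. a i j * y j) = l * y i"
  shows "\<exists>c. \<forall>i<n. y i = c * w i"
proof -
  define c where "c = Min ((\<lambda>i. y i / w i) ` {..<n})"
  have "c \<in> (\<lambda>i. y i / w i) ` {..<n}" unfolding c_def using npos by (intro Min_in) auto
  then obtain i0 where i0: "i0 < n" "c = y i0 / w i0" by auto
  have cle: "c \<le> y i / w i" if "i < n" for i unfolding c_def using that by (intro Min_le) auto
  define z where "z i = y i - c * w i" for i
  have nn: "0 \<le> z i" if i: "i < n" for i
    using cle[OF i] wpos[OF i] unfolding z_def by (simp add: field_simps)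
  have ez: "(\<Sum>j<n. a i j * z j) = l * z i" if i: "i < n" for i
  proof -
    have "(\<Sum>j<n. a i j * z j) = (\<Sum>j<n. a i j * y j) - c * (\<Sum>j<n. a i j * w j)"
      unfolding z_def by (simp add: algebra_simps sum_subtractf sum_distrib_left)
    thus ?thesis using ey[OF i] ew[OF i] unfolding z_def by (simp add: algebra_simps)
  qed
  have z0: "z i0 = 0" using i0 wpos[OF i0(1)] unfolding z_def by simp
  have "\<forall>i<n. y i = c * w i"
  proof (intro allI impI)
    fix i assume "i < n"
    from zero_prop[OF nn ez i0(1) z0 this] show "y i = c * w i" unfolding z_def by simp
  qed
  thus ?thesis by blast
qed

end


context symmetzler begin

context
  fixes U :: "nat \<Rightarrow> nat \<Rightarrow> real" and es :: "nat \<Rightarrow> real"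
  assumes orth: "eqn n (mm n (tr U) U) idm" and eig: "eqn n (mm n a U) (mm n U (dg es))"
begin

lemma swapL: "(\<Sum>p<n. (f p::real) * (\<Sum>j<n. g j p)) = (\<Sum>j<n. \<Sum>p<n. f p * g j p)"
  by (simp only: sum_distrib_left) (rule sum.swap)

definition co :: "(nat \<Rightarrow> real) \<Rightarrow> nat \<Rightarrow> real" where "co x p = (\<Sum>j<n. U j p * x j)"

lemma compl: "i < n \<Longrightarrow> j < n \<Longrightarrow> (\<Sum>p<n. U i p * U j p) = (if i = j then 1 else 0)"
  using eqnD[OF orth_complete[OF orth]] unfolding mm_def tr_def idm_def by auto

lemma eigU: "i < n \<Longrightarrow> p < n \<Longrightarrow> (\<Sum>j<n. a i j * U j p) = U i p * es p"
  using eqnD[OF eig] unfolding mm_dg by (auto simp: mm_def)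

lemma E1: assumes i: "i < n" shows "x i = (\<Sum>p<n. U i p * co x p)"
proof -
  have "(\<Sum>p<n. U i p * co x p) = (\<Sum>j<n. (\<Sum>p<n. U i p * U j p) * x j)"
    unfolding co_def swapL by (simp add: sum_distrib_right mult.assoc)
  also have "\<dots> = (\<Sum>j<n. (if i = j then x j else 0))" by (intro sum.cong) (auto simp: compl i)
  also have "\<dots> = x i" using i by (simp add: sum.delta)
  finally show ?thesis by simp
qed

lemma E2: assumes i: "i < n" shows "(\<Sum>j<n. a i j * x j) = (\<Sum>p<n. U i p * es p * co x p)"
proof -
  have "(\<Sum>j<n. a i j * x j) = (\<Sum>j<n. a i j * (\<Sum>p<n. U j p * co x p))"
  proof (intro sum.cong refl)
    fix j assume "j \<in> {..<n}"
    hence j: "j < n" by simp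
    show "a i j * x j = a i j * (\<Sum>p<n. U j p * co x p)" by (simp only: E1[OF j, symmetric])
  qed
  also have "\<dots> = (\<Sum>p<n. (\<Sum>j<n. a i j * U j p) * co x p)"
    unfolding swapL by (simp only: sum_distrib_right mult.assoc)
  also have "\<dots> = (\<Sum>p<n. U i p * es p * co x p)" by (intro sum.cong) (auto simp: eigU i)
  finally show ?thesis .
qed

lemma E3: "(\<Sum>i<n. (x i)\<^sup>2) = (\<Sum>p<n. (co x p)\<^sup>2)"
proof -
  have "(\<Sum>i<n. (x i)\<^sup>2) = (\<Sum>i<n. x i * (\<Sum>p<n. U i p * co x p))"
  proof (intro sum.cong refl)
    fix i assume "i \<in> {..<n}"
    hence i: "i < n" by simp
    show "(x i)\<^sup>2 = x i * (\<Sum>p<n. U i p * co x p)"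
      unfolding power2_eq_square by (simp only: E1[OF i, symmetric])
  qed
  also have "\<dots> = (\<Sum>p<n. \<Sum>i<n. x i * (U i p * co x p))" by (rule swapL)
  also have "\<dots> = (\<Sum>p<n. (\<Sum>i<n. U i p * x i) * co x p)"
    by (simp only: sum_distrib_right) (intro sum.cong refl, simp add: mult_ac)
  also have "\<dots> = (\<Sum>p<n. co x p * co x p)" by (simp add: co_def)
  finally show ?thesis by (simp add: power2_eq_square)
qed

lemma E4: "(\<Sum>i<n. x i * (\<Sum>j<n. a i j * x j)) = (\<Sum>p<n. es p * (co x p)\<^sup>2)"
proof -
  have "(\<Sum>i<n. x i * (\<Sum>j<n. a i j * x j)) = (\<Sum>i<n. x i * (\<Sum>p<n. U i p * es p * co x p))"
    by (intro sum.cong refl) (simp add: E2)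
  also have "\<dots> = (\<Sum>p<n. \<Sum>i<n. x i * (U i p * es p * co x p))" by (rule swapL)
  also have "\<dots> = (\<Sum>p<n. es p * (\<Sum>i<n. U i p * x i) * co x p)"
    by (simp only: sum_distrib_right sum_distrib_left) (intro sum.cong refl, simp add: mult_ac)
  also have "\<dots> = (\<Sum>p<n. es p * co x p * co x p)" by (simp add: co_def)
  finally show ?thesis by (simp add: power2_eq_square mult_ac)
qed

lemma qf_le: assumes "\<And>p. p < n \<Longrightarrow> es p \<le> l"
  shows "(\<Sum>i<n. x i * (\<Sum>j<n. a i j * x j)) \<le> l * (\<Sum>i<n. (x i)\<^sup>2)"
proof -
  have "l * (\<Sum>i<n. (x i)\<^sup>2) = (\<Sum>p<n. l * (co x p)\<^sup>2)" by (simp only: E3[of x] sum_distrib_left)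
  moreover have "(\<Sum>p<n. es p * (co x p)\<^sup>2) \<le> (\<Sum>p<n. l * (co x p)\<^sup>2)"
    using assms by (intro sum_mono mult_right_mono) auto
  ultimately show ?thesis by (simp only: E4[of x])
qed

lemma qf_eq: assumes le: "\<And>p. p < n \<Longrightarrow> es p \<le> l"
  and eq: "(\<Sum>i<n. x i * (\<Sum>j<n. a i j * x j)) = l * (\<Sum>i<n. (x i)\<^sup>2)" and i: "i < n"
  shows "(\<Sum>j<n. a i j * x j) = l * x i"
proof -
  have "l * (\<Sum>i<n. (x i)\<^sup>2) = (\<Sum>p<n. l * (co x p)\<^sup>2)" by (simp only: E3[of x] sum_distrib_left)
  hence "(\<Sum>p<n. es p * (co x p)\<^sup>2) = (\<Sum>p<n. l * (co x p)\<^sup>2)" using eq by (simp only: E4[of x])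
  hence "(\<Sum>p<n. (l - es p) * (co x p)\<^sup>2) = 0"
    by (simp add: algebra_simps sum_subtractf)
  moreover have "\<forall>p\<in>{..<n}. 0 \<le> (l - es p) * (co x p)\<^sup>2" using le by auto
  ultimately have z: "\<forall>p\<in>{..<n}. (l - es p) * (co x p)\<^sup>2 = 0"
    using sum_nonneg_eq_0_iff[of "{..<n}" "\<lambda>p. (l - es p) * (co x p)\<^sup>2"] by auto
  have "es p * co x p = l * co x p" if "p < n" for p using z that by auto
  hence "(\<Sum>j<n. a i j * x j) = (\<Sum>p<n. U i p * (l * co x p))" unfolding E2[OF i]
    by (intro sum.cong) (auto simp: mult.assoc)
  also have "\<dots> = l * x i" unfolding E1[OF i, of x] by (simp add: sum_distrib_left mult_ac)
  finally show ?thesis .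
qed

end

lemma perron:
  "\<exists>U es w l k0. eqn n (mm n (tr U) U) idm \<and> eqn n (mm n a U) (mm n U (dg es))
     \<and> k0 < n \<and> es k0 = l \<and> (\<forall>k<n. k \<noteq> k0 \<longrightarrow> es k < l)
     \<and> (\<forall>i<n. 0 < w i) \<and> (\<Sum>i<n. (w i)\<^sup>2) = 1 \<and> (\<forall>i<n. U i k0 = w i)
     \<and> (\<forall>i<n. (\<Sum>j<n. a i j * w j) = l * w i)"
proof -
  obtain U es where orth: "eqn n (mm n (tr U) U) idm" and eig: "eqn n (mm n a U) (mm n U (dg es))"
    using spectral[of n a] sym by blast
  define l where "l = Max (es ` {..<n})"
  have "l \<in> es ` {..<n}" unfolding l_def using npos by (intro Min_in Max_in) auto
  then obtain k1 where k1: "k1 < n" "es k1 = l" by auto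
  have esle: "es p \<le> l" if "p < n" for p unfolding l_def using that by (intro Max_ge) auto
  define u where "u i = U i k1" for i
  have colunit: "(\<Sum>i<n. (U i k)\<^sup>2) = 1" if "k < n" for k
    using eqnD[OF orth that that] unfolding mm_def tr_def idm_def by (simp add: power2_eq_square)
  have colev: "(\<Sum>j<n. a i j * U j k) = es k * U i k" if "i < n" "k < n" for i k
    using eigU[OF orth eig that] by simp
  have u1: "(\<Sum>i<n. (u i)\<^sup>2) = 1" unfolding u_def using colunit[OF k1(1)] .
  have ue: "(\<Sum>j<n. a i j * u j) = l * u i" if "i < n" for i unfolding u_def using colev[OF that k1(1)] k1 by simp
  define g where "g i = \<bar>u i\<bar>" for i
  have g1: "(\<Sum>i<n. (g i)\<^sup>2) = 1" unfolding g_def using u1 by simp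
  have "(\<Sum>i<n. u i * (\<Sum>j<n. a i j * u j)) = (\<Sum>i<n. l * (u i)\<^sup>2)"
    by (intro sum.cong refl) (simp add: ue power2_eq_square)
  hence uq: "(\<Sum>i<n. u i * (\<Sum>j<n. a i j * u j)) = l" using u1 by (simp add: sum_distrib_left[symmetric])
  have "(\<Sum>i<n. u i * (\<Sum>j<n. a i j * u j)) \<le> (\<Sum>i<n. g i * (\<Sum>j<n. a i j * g j))"
    unfolding sum_distrib_left
  proof (intro sum_mono)
    fix i j assume i: "i \<in> {..<n}" and j: "j \<in> {..<n}"
    show "u i * (a i j * u j) \<le> g i * (a i j * g j)"
    proof (cases "i = j")
      case True then show ?thesis unfolding g_def by (simp add: abs_mult_self_eq)
    next
      case False
      hence "0 \<le> a i j" using metz i j by auto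
      moreover have "u i * u j \<le> g i * g j" unfolding g_def
        by (simp only: abs_mult[symmetric] abs_ge_self)
      ultimately have "a i j * (u i * u j) \<le> a i j * (g i * g j)" by (rule mult_left_mono[rotated])
      thus ?thesis by (simp add: mult_ac)
    qed
  qed
  hence "l \<le> (\<Sum>i<n. g i * (\<Sum>j<n. a i j * g j))" using uq by simp
  moreover have "(\<Sum>i<n. g i * (\<Sum>j<n. a i j * g j)) \<le> l * (\<Sum>i<n. (g i)\<^sup>2)" by (rule qf_le[OF orth eig esle])
  ultimately have geq: "(\<Sum>i<n. g i * (\<Sum>j<n. a i j * g j)) = l * (\<Sum>i<n. (g i)\<^sup>2)" using g1 by simp
  have ge: "(\<Sum>j<n. a i j * g j) = l * g i" if "i < n" for i using qf_eq[OF orth eig esle geq that] .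
  have gpos: "0 < g i" if i: "i < n" for i
  proof (rule ccontr)
    assume "\<not> 0 < g i"
    hence gi0: "g i = 0" unfolding g_def by simp
    have nng: "0 \<le> g j" if "j < n" for j unfolding g_def by simp
    have "\<forall>j<n. g j = 0" using zero_prop[OF nng ge i gi0] by blast
    hence "(\<Sum>i<n. (g i)\<^sup>2) = 0" by simp
    thus False using g1 by simp
  qed
  have colw: "\<exists>c. c * c = 1 \<and> (\<forall>i<n. U i k = c * g i)" if k: "k < n" "es k = l" for k
  proof -
    obtain c where c: "\<forall>i<n. U i k = c * g i"
      using unique_vec[OF gpos ge, of "\<lambda>i. U i k"] colev[OF _ k(1)] k(2) by auto
    have "1 = (\<Sum>i<n. (c * g i)\<^sup>2)" using colunit[OF k(1)] c by simp
    also have "\<dots> = (c * c) * (\<Sum>i<n. (g i)\<^sup>2)" by (simp add: sum_distrib_left power2_eq_square mult_ac)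
    also have "\<dots> = c * c" using g1 by simp
    finally show ?thesis using c by auto
  qed
  have uniq: "k = k1" if k: "k < n" "es k = l" for k
  proof (rule ccontr)
    assume ne: "k \<noteq> k1"
    obtain c where c: "c * c = 1" "\<forall>i<n. U i k = c * g i" using colw[OF k] by blast
    obtain d where d: "d * d = 1" "\<forall>i<n. U i k1 = d * g i" using colw[OF k1] by blast
    have "0 = (\<Sum>i<n. U i k * U i k1)" using eqnD[OF orth k(1) k1(1)] ne unfolding mm_def tr_def idm_def by simp
    also have "\<dots> = (\<Sum>i<n. (c * d) * (g i)\<^sup>2)" using c d by (intro sum.cong) (auto simp: power2_eq_square)
    also have "\<dots> = (c * d) * (\<Sum>i<n. (g i)\<^sup>2)" by (simp add: sum_distrib_left)
    also have "\<dots> = c * d" using g1 by simp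
    finally have "c * d = 0" by simp
    hence "c * d * (c * d) = 0" by simp
    moreover have "c * d * (c * d) = (c * c) * (d * d)" by (simp add: mult_ac)
    ultimately show False using c(1) d(1) by simp
  qed
  obtain c where c: "c * c = 1" "\<forall>i<n. U i k1 = c * g i" using colw[OF k1] by blast
  define U' where "U' i j = (if j = k1 then c else 1) * U i j" for i j
  have orth': "eqn n (mm n (tr U') U') idm" unfolding eqn_def
  proof (intro allI impI)
    fix i j assume i: "i < n" and j: "j < n"
    have "mm n (tr U') U' i j = (if i = k1 then c else 1) * (if j = k1 then c else 1) * mm n (tr U) U i j"
      unfolding mm_def tr_def U'_def by (simp add: sum_distrib_left mult_ac)
    also have "\<dots> = idm i j" using eqnD[OF orth i j] c(1) unfolding idm_def by auto
    finally show "mm n (tr U') U' i j = idm i j" .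
  qed
  have eig': "eqn n (mm n a U') (mm n U' (dg es))" unfolding eqn_def
  proof (intro allI impI)
    fix i j assume i: "i < n" and j: "j < n"
    have "mm n a U' i j = (if j = k1 then c else 1) * mm n a U i j"
      unfolding mm_def U'_def by (simp add: sum_distrib_left mult_ac)
    also have "\<dots> = (if j = k1 then c else 1) * (U i j * es j)" using eqnD[OF eig i j] j unfolding mm_dg by simp
    also have "\<dots> = mm n U' (dg es) i j" using j unfolding mm_dg U'_def by simp
    finally show "mm n a U' i j = mm n U' (dg es) i j" .
  qed
  have U'k1: "U' i k1 = g i" if "i < n" for i unfolding U'_def using c that by (simp add: mult.assoc[symmetric])
  have "\<forall>k<n. k \<noteq> k1 \<longrightarrow> es k < l" using esle uniq by (meson le_less)
  thus ?thesis using orth' eig' k1 gpos g1 U'k1 ge by blast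
qed

end


lemma sv_sym: "sv S j l = sv S l j" unfolding sv_def by auto

context
  fixes N :: nat and \<Gamma> :: "nat \<Rightarrow> nat \<Rightarrow> real"
  assumes sym: "\<And>j l. j < N \<Longrightarrow> l < N \<Longrightarrow> \<Gamma> j l = \<Gamma> l j"
    and diag: "\<And>j. j < N \<Longrightarrow> \<Gamma> j j = - (\<Sum>l \<in> {0..<N} - {j}. \<Gamma> j l)"
begin

lemma Theta_F:
  assumes j: "j < N" and l: "l < N"
  shows "Theta N \<Gamma> S (j,l) = (\<Sum>m<N. \<Gamma> j m * sv S m l + sv S j m * \<Gamma> m l)
     + \<Gamma> j l * (sv S j j + sv S l l - 2 * sv S j l)"
proof (cases "j = l")
  case True
  define R where "R = {0..<N} - {j}"
  have fR: "finite R" unfolding R_def by simp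
  have jR: "j \<notin> R" unfolding R_def by simp
  have U: "{..<N} = insert j R" unfolding R_def using j by auto
  have dj: "\<Gamma> j j = - (\<Sum>m\<in>R. \<Gamma> j m)" using diag[OF j] unfolding R_def .
  have "Theta N \<Gamma> S (j,j) = (\<Sum>m\<in>R. \<Gamma> j m * (sv S j m - sv S j j) + \<Gamma> j m * (sv S m j - sv S j j))"
    unfolding Theta_def R_def by simp
  also have "\<dots> = (\<Sum>m\<in>R. 2 * (\<Gamma> j m * sv S j m) - 2 * sv S j j * \<Gamma> j m)"
  proof (intro sum.cong refl)
    fix m assume "m \<in> R"
    show "\<Gamma> j m * (sv S j m - sv S j j) + \<Gamma> j m * (sv S m j - sv S j j) = 2 * (\<Gamma> j m * sv S j m) - 2 * sv S j j * \<Gamma> j m"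
      unfolding sv_sym[of S m j] by (simp add: algebra_simps)
  qed
  also have "\<dots> = (\<Sum>m\<in>R. 2 * (\<Gamma> j m * sv S j m)) - 2 * sv S j j * (\<Sum>m\<in>R. \<Gamma> j m)"
    by (simp add: sum_subtractf sum_distrib_left)
  finally have L: "Theta N \<Gamma> S (j,l) = (\<Sum>m\<in>R. 2 * (\<Gamma> j m * sv S j m)) - 2 * sv S j j * (\<Sum>m\<in>R. \<Gamma> j m)"
    using True by simp
  have "(\<Sum>m<N. \<Gamma> j m * sv S m l + sv S j m * \<Gamma> m l) = (\<Sum>m\<in>insert j R. 2 * (\<Gamma> j m * sv S j m))"
    unfolding U True
  proof (intro sum.cong refl)
    fix m assume "m \<in> insert l R"
    hence "m < N" using U l by auto
    thus "\<Gamma> l m * sv S m l + sv S l m * \<Gamma> m l = 2 * (\<Gamma> l m * sv S l m)"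
      unfolding sv_sym[of S m l] using sym[OF l, of m] by simp
  qed
  also have "\<dots> = 2 * (\<Gamma> j j * sv S j j) + (\<Sum>m\<in>R. 2 * (\<Gamma> j m * sv S j m))"
    using fR jR by simp
  finally have F: "(\<Sum>m<N. \<Gamma> j m * sv S m l + sv S j m * \<Gamma> m l) = 2 * (\<Gamma> j j * sv S j j) + (\<Sum>m\<in>R. 2 * (\<Gamma> j m * sv S j m))" .
  show ?thesis unfolding F L dj using True by (simp add: algebra_simps)
next
  case False
  define R where "R = {0..<N} - {j, l}"
  have fR: "finite R" unfolding R_def by simp
  have jR: "j \<notin> R" "l \<notin> R" unfolding R_def by auto
  have U: "{..<N} = insert j (insert l R)" unfolding R_def using j l by auto
  have U1: "{0..<N} - {j} = insert l R" unfolding R_def using j l False by auto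
  have U2: "{0..<N} - {l} = insert j R" unfolding R_def using j l False by auto
  define SA where "SA = (\<Sum>m\<in>R. \<Gamma> j m)"
  define SB where "SB = (\<Sum>m\<in>R. \<Gamma> l m)"
  have dj: "\<Gamma> j j = - (\<Gamma> j l + SA)" using diag[OF j] fR jR unfolding U1 SA_def by simp
  have dl: "\<Gamma> l l = - (\<Gamma> j l + SB)" using diag[OF l] fR jR sym[OF j l] unfolding U2 SB_def by simp
  have L: "Theta N \<Gamma> S (j,l) = 2 * \<Gamma> j l * (sv S j j + sv S l l - 2 * sv S j l)
     + (\<Sum>m\<in>R. \<Gamma> l m * sv S j m) - sv S j l * SB + (\<Sum>m\<in>R. \<Gamma> j m * sv S m l) - sv S j l * SA"
    unfolding Theta_def SA_def SB_def R_def using False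
    by (simp add: sum.distrib sum_subtractf sum_distrib_left algebra_simps)
  have "(\<Sum>m<N. \<Gamma> j m * sv S m l + sv S j m * \<Gamma> m l)
     = (\<Gamma> j j * sv S j l + sv S j j * \<Gamma> j l) + (\<Gamma> j l * sv S l l + sv S j l * \<Gamma> l l)
       + (\<Sum>m\<in>R. \<Gamma> j m * sv S m l + sv S j m * \<Gamma> m l)"
    unfolding U using fR jR False sym[OF j l] by simp
  also have "(\<Sum>m\<in>R. \<Gamma> j m * sv S m l + sv S j m * \<Gamma> m l)
     = (\<Sum>m\<in>R. \<Gamma> j m * sv S m l) + (\<Sum>m\<in>R. \<Gamma> l m * sv S j m)"
    unfolding sum.distrib[symmetric] using sym l unfolding R_def by (intro sum.cong refl) auto
  finally show ?thesis unfolding L dj dl by (simp add: algebra_simps)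
qed

end

lemma sum3_swap13: "(\<Sum>a<N. \<Sum>b<N. \<Sum>c<N. (f a b c :: real)) = (\<Sum>c<N. \<Sum>b<N. \<Sum>a<N. f a b c)"
proof -
  have "(\<Sum>a<N. \<Sum>b<N. \<Sum>c<N. f a b c) = (\<Sum>a<N. \<Sum>c<N. \<Sum>b<N. f a b c)"
    by (rule sum.cong[OF refl], rule sum.swap)
  also have "\<dots> = (\<Sum>c<N. \<Sum>a<N. \<Sum>b<N. f a b c)" by (rule sum.swap[where g="\<lambda>a c. \<Sum>b<N. f a b c"])
  also have "\<dots> = (\<Sum>c<N. \<Sum>b<N. \<Sum>a<N. f a b c)"
  proof (rule sum.cong[OF refl])
    fix c show "(\<Sum>a<N. \<Sum>b<N. f a b c) = (\<Sum>b<N. \<Sum>a<N. f a b c)" by (rule sum.swap)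
  qed
  finally show ?thesis .
qed

lemma sum3_swap23: "(\<Sum>a<N. \<Sum>b<N. \<Sum>c<N. (f a b c :: real)) = (\<Sum>a<N. \<Sum>c<N. \<Sum>b<N. f a b c)"
  by (rule sum.cong[OF refl], rule sum.swap)

locale gam =
  fixes N :: nat and \<Gamma> :: "nat \<Rightarrow> nat \<Rightarrow> real" and \<Lambda> :: "nat \<Rightarrow> real"
  assumes sym: "\<And>j l. j < N \<Longrightarrow> l < N \<Longrightarrow> \<Gamma> j l = \<Gamma> l j"
    and offdiag: "\<And>j l. j < N \<Longrightarrow> l < N \<Longrightarrow> j \<noteq> l \<Longrightarrow> \<Gamma> j l \<ge> 0"
    and diag: "\<And>j. j < N \<Longrightarrow> \<Gamma> j j = - (\<Sum>l \<in> {0..<N} - {j}. \<Gamma> j l)"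
begin

lemmas TF = Theta_F[OF sym diag]

definition XX :: "(nat \<Rightarrow> nat \<Rightarrow> real) \<Rightarrow> nat \<Rightarrow> nat \<Rightarrow> real" where
  "XX t j l = (\<Sum>m<N. \<Gamma> j m * t m l + t j m * \<Gamma> m l) + \<Gamma> j l * (t j j + t l l - 2 * t j l)
      - (\<Lambda> j + \<Lambda> l) * t j l"

lemma TP_XX: "j < N \<Longrightarrow> l < N \<Longrightarrow> ThetaPsi N \<Gamma> \<Lambda> S (j,l) = XX (sv S) j l"
  unfolding ThetaPsi_def Psi_def XX_def using TF by simp

definition "P1 t u = (\<Sum>j<N. \<Sum>l<N. \<Sum>m<N. u j l * \<Gamma> j m * t m l)"
definition "P2 t u = (\<Sum>j<N. \<Sum>l<N. \<Sum>m<N. u j l * t j m * \<Gamma> m l)"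
definition "P3 t u = (\<Sum>j<N. \<Sum>l<N. u j l * \<Gamma> j l * t j j)"
definition "P4 t u = (\<Sum>j<N. \<Sum>l<N. u j l * \<Gamma> j l * t l l)"
definition "P5 t u = (\<Sum>j<N. \<Sum>l<N. 2 * (u j l * \<Gamma> j l * t j l))"
definition "P6 t u = (\<Sum>j<N. \<Sum>l<N. u j l * (\<Lambda> j + \<Lambda> l) * t j l)"
definition "Q1 t u = (\<Sum>j<N. \<Sum>m<N. u j j * \<Gamma> j m * t m j)"
definition "Q2 t u = (\<Sum>j<N. \<Sum>m<N. u j j * t j m * \<Gamma> m j)"
definition "Q4 t u = (\<Sum>j<N. u j j * (\<Lambda> j + \<Lambda> j) * t j j)"

definition "Phi t u = (\<Sum>j<N. \<Sum>l<N. u j l * XX t j l) + (\<Sum>j<N. u j j * XX t j j)"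

lemma Phi_expand: "Phi t u = P1 t u + P2 t u + P3 t u + P4 t u - P5 t u - P6 t u + (Q1 t u + Q2 t u - Q4 t u)"
proof -
  have a: "u j l * XX t j l = (\<Sum>m<N. u j l * \<Gamma> j m * t m l) + (\<Sum>m<N. u j l * t j m * \<Gamma> m l)
     + u j l * \<Gamma> j l * t j j + u j l * \<Gamma> j l * t l l - 2 * (u j l * \<Gamma> j l * t j l)
     - u j l * (\<Lambda> j + \<Lambda> l) * t j l" for j l
    unfolding XX_def by (simp add: sum_distrib_left sum.distrib algebra_simps)
  have c2: "(\<Sum>j<N. 2 * (u j j * \<Gamma> j j * t j j)) = (\<Sum>j<N. u j j * \<Gamma> j j * t j j) + (\<Sum>j<N. u j j * \<Gamma> j j * t j j)"
    unfolding sum.distrib[symmetric] by (simp only: mult_2)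
  show ?thesis unfolding Phi_def a P1_def P2_def P3_def P4_def P5_def P6_def Q1_def Q2_def Q4_def
    by (simp only: sum.distrib sum_subtractf c2)
qed

context
  fixes t u :: "nat \<Rightarrow> nat \<Rightarrow> real"
  assumes ts: "\<And>j l. j < N \<Longrightarrow> l < N \<Longrightarrow> t j l = t l j"
    and us: "\<And>j l. j < N \<Longrightarrow> l < N \<Longrightarrow> u j l = u l j"
begin

lemma P1s: "P1 t u = P1 u t"
proof -
  have "P1 u t = (\<Sum>m<N. \<Sum>l<N. \<Sum>j<N. t j l * \<Gamma> j m * u m l)" unfolding P1_def by (rule sum3_swap13)
  also have "\<dots> = P1 t u" unfolding P1_def
    by (intro sum.cong refl) (auto simp: sym mult_ac)
  finally show ?thesis ..
qed

lemma P2s: "P2 t u = P2 u t"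
proof -
  have "P2 u t = (\<Sum>j<N. \<Sum>m<N. \<Sum>l<N. t j l * u j m * \<Gamma> m l)" unfolding P2_def by (rule sum3_swap23)
  also have "\<dots> = P2 t u" unfolding P2_def
    by (intro sum.cong refl) (auto simp: sym mult_ac)
  finally show ?thesis ..
qed

lemma P5s: "P5 t u = P5 u t" unfolding P5_def by (simp add: mult_ac)
lemma P6s: "P6 t u = P6 u t" unfolding P6_def by (simp add: mult_ac)
lemma Q4s: "Q4 t u = Q4 u t" unfolding Q4_def by (simp add: mult_ac)

lemma P3Q1: "P3 t u = Q1 u t"
  unfolding P3_def Q1_def by (intro sum.cong refl) (auto simp: us mult_ac)

lemma P4Q2: "P4 t u = Q2 u t"
proof -
  have "P4 t u = (\<Sum>l<N. \<Sum>j<N. u j l * \<Gamma> j l * t l l)" unfolding P4_def by (rule sum.swap)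
  also have "\<dots> = Q2 u t" unfolding Q2_def
    by (intro sum.cong refl) (auto simp: us mult_ac)
  finally show ?thesis .
qed

lemma P3Q1': "P3 u t = Q1 t u"
  unfolding P3_def Q1_def by (intro sum.cong refl) (auto simp: ts mult_ac)

lemma P4Q2': "P4 u t = Q2 t u"
proof -
  have "P4 u t = (\<Sum>l<N. \<Sum>j<N. t j l * \<Gamma> j l * u l l)" unfolding P4_def by (rule sum.swap)
  also have "\<dots> = Q2 t u" unfolding Q2_def
    by (intro sum.cong refl) (auto simp: ts mult_ac)
  finally show ?thesis .
qed

lemma Phi_sym: "Phi t u = Phi u t"
  unfolding Phi_expand using P1s P2s P5s P6s Q4s P3Q1 P4Q2 P3Q1' P4Q2' by simp

end

end


lemma tn_list_Suc: "tn_list (Suc N) = tn_list N @ map (\<lambda>j. (j, N)) [0..<Suc N]"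
  unfolding tn_list_def by simp

lemma set_tn_list: "set (tn_list N) = TN N"
proof (induction N)
  case 0 then show ?case unfolding tn_list_def TN_def by simp
next
  case (Suc N)
  show ?case unfolding tn_list_Suc using Suc unfolding TN_def by auto
qed

lemma finite_TN[simp]: "finite (TN N)" by (metis set_tn_list List.finite_set)

lemma distinct_tn_list: "distinct (tn_list N)"
proof (induction N)
  case 0 then show ?case unfolding tn_list_def by simp
next
  case (Suc N)
  have "set (tn_list N) \<inter> set (map (\<lambda>j. (j, N)) [0..<Suc N]) = {}"
    unfolding set_tn_list TN_def by auto
  moreover have "distinct (map (\<lambda>j. (j, N)) [0..<Suc N])" by (auto simp: distinct_map inj_on_def)
  ultimately show ?case unfolding tn_list_Suc using Suc by simp
qed

lemma TN_sum2:
  assumes hs: "\<And>j l. j < N \<Longrightarrow> l < N \<Longrightarrow> (h j l :: real) = h l j"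
  shows "2 * (\<Sum>p\<in>TN N. h (fst p) (snd p)) = (\<Sum>j<N. \<Sum>l<N. h j l) + (\<Sum>j<N. h j j)"
proof -
  define A where "A = {(j,l). j < l \<and> l < N}"
  define B where "B = {(j,l). l < j \<and> j < N}"
  define D where "D = (\<lambda>j. (j,j)) ` {..<N}"
  define g where "g p = h (fst p) (snd p)" for p
  have fA: "finite A" by (rule finite_subset[of _ "{..<N} \<times> {..<N}"]) (auto simp: A_def)
  have fB: "finite B" by (rule finite_subset[of _ "{..<N} \<times> {..<N}"]) (auto simp: B_def)
  have fD: "finite D" unfolding D_def by simp
  have TN: "TN N = A \<union> D" unfolding TN_def A_def D_def by auto
  have sq: "{..<N} \<times> {..<N} = (A \<union> D) \<union> B" unfolding A_def B_def D_def by auto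
  have AD: "A \<inter> D = {}" unfolding A_def D_def by auto
  have ADB: "(A \<union> D) \<inter> B = {}" unfolding A_def B_def D_def by auto
  have BA: "B = prod.swap ` A" unfolding A_def B_def by auto
  have sB: "sum g B = sum g A"
  proof -
    have "sum g B = sum (g \<circ> prod.swap) A" unfolding BA by (rule sum.reindex) simp
    also have "\<dots> = sum g A" unfolding g_def A_def by (intro sum.cong refl) (auto simp: hs)
    finally show ?thesis .
  qed
  have sD: "sum g D = (\<Sum>j<N. h j j)" unfolding D_def g_def by (subst sum.reindex) (auto simp: inj_on_def)
  have "(\<Sum>j<N. \<Sum>l<N. h j l) = sum g ({..<N} \<times> {..<N})"
    unfolding g_def sum.cartesian_product by (simp add: case_prod_unfold)
  also have "\<dots> = sum g A + sum g D + sum g B"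
    unfolding sq using fA fB fD AD ADB by (simp add: sum.union_disjoint)
  finally have "(\<Sum>j<N. \<Sum>l<N. h j l) = 2 * sum g A + sum g D" using sB by simp
  moreover have "(\<Sum>p\<in>TN N. h (fst p) (snd p)) = sum g A + sum g D"
    unfolding TN g_def[symmetric] using fA fD AD by (simp add: sum.union_disjoint)
  ultimately show ?thesis using sD by simp
qed

lemma TN_sv: "p \<in> TN N \<Longrightarrow> T p = sv T (fst p) (snd p)"
  unfolding TN_def sv_def by auto

definition dl :: "nat \<times> nat \<Rightarrow> nat \<times> nat \<Rightarrow> real" where "dl q = (\<lambda>p. if p = q then 1 else 0)"

context gam begin

definition BF where "BF S T = (\<Sum>p\<in>TN N. T p * ThetaPsi N \<Gamma> \<Lambda> S p)"

lemma XX_sym: "j < N \<Longrightarrow> l < N \<Longrightarrow> XX (sv S) j l = XX (sv S) l j"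
proof -
  assume j: "j < N" and l: "l < N"
  have "(\<Sum>m<N. \<Gamma> j m * sv S m l + sv S j m * \<Gamma> m l) = (\<Sum>m<N. \<Gamma> l m * sv S m j + sv S l m * \<Gamma> m j)"
  proof (intro sum.cong refl)
    fix m assume "m \<in> {..<N}"
    hence m: "m < N" by simp
    show "\<Gamma> j m * sv S m l + sv S j m * \<Gamma> m l = \<Gamma> l m * sv S m j + sv S l m * \<Gamma> m j"
      using sym[OF j m] sym[OF l m] sv_sym[of S m l] sv_sym[of S m j] by simp
  qed
  thus ?thesis unfolding XX_def using sym[OF j l] sv_sym[of S j l] by (simp add: algebra_simps)
qed

lemma BF_Phi: "2 * BF S T = Phi (sv S) (sv T)"
proof -
  have "BF S T = (\<Sum>p\<in>TN N. sv T (fst p) (snd p) * XX (sv S) (fst p) (snd p))"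
    unfolding BF_def
  proof (intro sum.cong refl)
    fix p assume p: "p \<in> TN N"
    hence "fst p < N" "snd p < N" unfolding TN_def by auto
    thus "T p * ThetaPsi N \<Gamma> \<Lambda> S p = sv T (fst p) (snd p) * XX (sv S) (fst p) (snd p)"
      using TP_XX[of "fst p" "snd p" S] TN_sv[OF p, of T] by simp
  qed
  moreover have "2 * (\<Sum>p\<in>TN N. sv T (fst p) (snd p) * XX (sv S) (fst p) (snd p)) = Phi (sv S) (sv T)"
    unfolding Phi_def by (rule TN_sum2) (simp add: XX_sym sv_sym[of T])
  ultimately show ?thesis by simp
qed

lemma BF_sym: "BF S T = BF T S"
proof -
  have "Phi (sv S) (sv T) = Phi (sv T) (sv S)" by (rule Phi_sym) (simp_all add: sv_sym)
  thus ?thesis using BF_Phi[of S T] BF_Phi[of T S] by simp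
qed

lemma BF_dl: "r \<in> TN N \<Longrightarrow> BF S (dl r) = ThetaPsi N \<Gamma> \<Lambda> S r"
  unfolding BF_def dl_def by (simp add: sum.delta')

lemma TP_dl_sym: "q \<in> TN N \<Longrightarrow> r \<in> TN N \<Longrightarrow> ThetaPsi N \<Gamma> \<Lambda> (dl q) r = ThetaPsi N \<Gamma> \<Lambda> (dl r) q"
  using BF_dl BF_sym by metis

end


context gam begin

lemma XX_cong: assumes "\<And>x y. x < N \<Longrightarrow> y < N \<Longrightarrow> t x y = t' x y" and "j < N" "l < N"
  shows "XX t j l = XX t' j l"
proof -
  have e: "(\<Sum>m<N. \<Gamma> j m * t m l + t j m * \<Gamma> m l) = (\<Sum>m<N. \<Gamma> j m * t' m l + t' j m * \<Gamma> m l)"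
    by (rule sum.cong) (auto simp: assms)
  show ?thesis unfolding XX_def e using assms by simp
qed

lemma XX_zero: "XX (\<lambda>x y. 0) j l = 0" unfolding XX_def by simp
lemma XX_add: "XX (\<lambda>x y. f x y + g x y) j l = XX f j l + XX g j l"
  unfolding XX_def by (simp add: sum.distrib algebra_simps)
lemma XX_smult: "XX (\<lambda>x y. c * f x y) j l = c * XX f j l"
  unfolding XX_def by (simp add: sum_distrib_left algebra_simps)

lemma XX_sum: "finite K \<Longrightarrow> XX (\<lambda>x y. \<Sum>k\<in>K. c k * t k x y) j l = (\<Sum>k\<in>K. c k * XX (t k) j l)"
proof (induction K rule: finite_induct)
  case empty then show ?case using XX_zero by simp
next
  case (insert k K)
  have "XX (\<lambda>x y. \<Sum>k\<in>insert k K. c k * t k x y) j l = XX (\<lambda>x y. c k * t k x y + (\<Sum>k\<in>K. c k * t k x y)) j l"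
    using insert by simp
  also have "\<dots> = c k * XX (t k) j l + XX (\<lambda>x y. \<Sum>k\<in>K. c k * t k x y) j l"
    by (simp only: XX_add XX_smult)
  finally show ?case using insert by simp
qed

abbreviation "ts \<equiv> tn_list N"
abbreviation "nn \<equiv> length (tn_list N)"

lemma sv_sum: "sv (\<lambda>q. \<Sum>k\<in>K. c k * F k q) x y = (\<Sum>k\<in>K. c k * sv (F k) x y)"
  unfolding sv_def by simp

lemma TN_expand: assumes q: "q \<in> TN N" shows "(\<Sum>k<nn. S (ts ! k) * dl (ts ! k) q) = S q"
proof -
  from q obtain i where i: "i < nn" "ts ! i = q" using set_tn_list by (metis in_set_conv_nth)
  have "(\<Sum>k<nn. S (ts ! k) * dl (ts ! k) q) = (\<Sum>k<nn. if k = i then S q else 0)"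
  proof (intro sum.cong refl)
    fix k assume "k \<in> {..<nn}"
    hence "ts ! k = ts ! i \<longleftrightarrow> k = i" using i by (intro nth_eq_iff_index_eq[OF distinct_tn_list]) auto
    thus "S (ts ! k) * dl (ts ! k) q = (if k = i then S q else 0)" unfolding dl_def using i by auto
  qed
  also have "\<dots> = S q" using i by simp
  finally show ?thesis .
qed

lemma TP_linear: assumes p: "p \<in> TN N"
  shows "ThetaPsi N \<Gamma> \<Lambda> S p = (\<Sum>k<nn. ThetaPsi N \<Gamma> \<Lambda> (dl (ts ! k)) p * S (ts ! k))"
proof -
  obtain j l where pj: "p = (j,l)" and j: "j < N" and l: "l < N" using p unfolding TN_def by auto
  define S' where "S' q = (\<Sum>k<nn. S (ts ! k) * dl (ts ! k) q)" for q
  have "sv S x y = sv S' x y" if "x < N" "y < N" for x y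
    unfolding sv_def S'_def using TN_expand that unfolding TN_def by auto
  hence "XX (sv S) j l = XX (sv S') j l" using j l by (intro XX_cong) auto
  also have "sv S' = (\<lambda>x y. \<Sum>k<nn. S (ts ! k) * sv (dl (ts ! k)) x y)"
    unfolding S'_def by (intro ext) (rule sv_sum)
  also have "XX \<dots> j l = (\<Sum>k<nn. S (ts ! k) * XX (sv (dl (ts ! k))) j l)"
    by (rule XX_sum) simp
  finally show ?thesis unfolding pj using TP_XX[OF j l] by (simp add: mult.commute)
qed

lemma sv_dl: "sv (dl q) x y = (if (min x y, max x y) = q then 1 else 0)"
  unfolding sv_def dl_def by (auto simp: min_def max_def)

lemma TP_dl_nonneg: assumes p: "p \<in> TN N" and q: "q \<in> TN N" and pq: "p \<noteq> q"
  shows "0 \<le> ThetaPsi N \<Gamma> \<Lambda> (dl q) p"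
proof -
  obtain j l where pj: "p = (j,l)" and jl: "j \<le> l" and j: "j < N" and l: "l < N"
    using p unfolding TN_def by auto
  have t0: "sv (dl q) j l = 0" using pq jl unfolding sv_dl pj by (auto simp: min_def max_def)
  have nn: "0 \<le> sv (dl q) x y" for x y unfolding sv_dl by simp
  have A: "0 \<le> 2 * \<Gamma> j l * (if j \<noteq> l then 1 else 0) * (sv (dl q) j j + sv (dl q) l l - 2 * sv (dl q) j l)"
  proof (cases "j = l")
    case False
    hence "0 \<le> \<Gamma> j l" using offdiag j l by auto
    thus ?thesis using False t0 nn[of j j] nn[of l l] by simp
  qed simp
  have B: "0 \<le> (\<Sum>m \<in> {0..<N} - {j, l}. \<Gamma> l m * (sv (dl q) j m - sv (dl q) j l) + \<Gamma> j m * (sv (dl q) m l - sv (dl q) j l))"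
  proof (rule sum_nonneg)
    fix m assume "m \<in> {0..<N} - {j, l}"
    hence m: "m < N" "m \<noteq> j" "m \<noteq> l" by auto
    have "0 \<le> \<Gamma> l m" "0 \<le> \<Gamma> j m" using offdiag m j l by auto
    thus "0 \<le> \<Gamma> l m * (sv (dl q) j m - sv (dl q) j l) + \<Gamma> j m * (sv (dl q) m l - sv (dl q) j l)"
      unfolding t0 using nn[of j m] nn[of m l] by simp
  qed
  have "0 \<le> Theta N \<Gamma> (dl q) (j,l)" unfolding Theta_def using A B by simp
  moreover have "Psi \<Lambda> (dl q) (j,l) = 0" unfolding Psi_def using t0 by simp
  ultimately show ?thesis unfolding ThetaPsi_def pj by simp
qed

end


context gam begin

definition srt :: "nat \<Rightarrow> nat \<Rightarrow> nat \<times> nat" where "srt x y = (min x y, max x y)"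

lemma srt_TN: "x < N \<Longrightarrow> y < N \<Longrightarrow> srt x y \<in> TN N" unfolding srt_def TN_def by auto
lemma srt_sym: "srt x y = srt y x" unfolding srt_def by (auto simp: min_def max_def)
lemma srt_id: "x \<le> y \<Longrightarrow> srt x y = (x,y)" unfolding srt_def by auto

lemma TP_srt: "x < N \<Longrightarrow> y < N \<Longrightarrow> ThetaPsi N \<Gamma> \<Lambda> S (srt x y) = ThetaPsi N \<Gamma> \<Lambda> S (x,y)"
  unfolding srt_def using TP_XX XX_sym by (cases "x \<le> y") (auto simp: min_def max_def)

lemma TP_edge:
  assumes x: "x < N" and y: "y < N" and m: "m < N" and my: "m \<noteq> y" and g: "0 < \<Gamma> y m"
  shows "0 < ThetaPsi N \<Gamma> \<Lambda> (dl (srt x m)) (x,y)" and "srt x y \<noteq> srt x m"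
proof -
  show ne: "srt x y \<noteq> srt x m" using my unfolding srt_def by (auto simp: min_def max_def split: if_splits)
  define t where "t = sv (dl (srt x m))"
  have t0: "t x y = 0" unfolding t_def sv_dl using ne unfolding srt_def by auto
  have nn: "0 \<le> t a b" for a b unfolding t_def sv_dl by simp
  have txm: "t x m = 1" unfolding t_def sv_dl srt_def by simp
  define A where "A = 2 * \<Gamma> x y * (if x \<noteq> y then 1 else 0) * (t x x + t y y - 2 * t x y)"
  define f where "f n = \<Gamma> y n * (t x n - t x y) + \<Gamma> x n * (t n y - t x y)" for n
  define R where "R = {0..<N} - {x, y}"
  have Th: "Theta N \<Gamma> (dl (srt x m)) (x,y) = A + sum f R"
    unfolding Theta_def A_def f_def R_def t_def by simp
  have fnn: "0 \<le> f n" if "n \<in> R" for n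
  proof -
    from that have n: "n < N" "n \<noteq> x" "n \<noteq> y" unfolding R_def by auto
    have "0 \<le> \<Gamma> y n" "0 \<le> \<Gamma> x n" using offdiag n x y by auto
    thus ?thesis unfolding f_def t0 using nn[of x n] nn[of n y] by simp
  qed
  have Ann: "0 \<le> A"
  proof (cases "x = y")
    case False
    hence "0 \<le> \<Gamma> x y" using offdiag x y by auto
    thus ?thesis unfolding A_def t0 using False nn[of x x] nn[of y y] by simp
  qed (simp add: A_def)
  have "0 < A + sum f R"
  proof (cases "m = x")
    case True
    hence xy: "x \<noteq> y" using my by simp
    have gxy: "0 < \<Gamma> x y" using g True sym[OF x y] by simp
    have "A = 2 * \<Gamma> x y * (1 + t y y)" unfolding A_def t0 using xy txm True by simp
    hence "0 < A" using gxy nn[of y y] by (simp add: add_pos_nonneg)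
    moreover have "0 \<le> sum f R" using fnn by (simp add: sum_nonneg)
    ultimately show ?thesis by simp
  next
    case False
    hence mR: "m \<in> R" unfolding R_def using m my by auto
    have "0 \<le> \<Gamma> x m" using offdiag[OF x m] False by auto
    hence "\<Gamma> y m \<le> f m" unfolding f_def t0 txm using nn[of m y] by simp
    moreover have "f m \<le> sum f R" using fnn mR by (intro member_le_sum) (auto simp: R_def)
    ultimately show ?thesis using g Ann by simp
  qed
  moreover have "Psi \<Lambda> (dl (srt x m)) (x,y) = 0" unfolding Psi_def using t0 unfolding t_def by simp
  ultimately show "0 < ThetaPsi N \<Gamma> \<Lambda> (dl (srt x m)) (x,y)" unfolding ThetaPsi_def Th by simp
qed

definition "Ep = {(p,q). p \<in> TN N \<and> q \<in> TN N \<and> p \<noteq> q \<and> 0 < ThetaPsi N \<Gamma> \<Lambda> (dl q) p}"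
definition "EG = {(a,b). a < N \<and> b < N \<and> a \<noteq> b \<and> 0 < \<Gamma> a b}"

lemma move: assumes "(y, m) \<in> EG\<^sup>*" and x: "x < N" and y: "y < N"
  shows "(srt x y, srt x m) \<in> Ep\<^sup>*"
  using assms(1)
proof (induction rule: rtrancl_induct)
  case base then show ?case by simp
next
  case (step m' m)
  from step(2) have m': "m' < N" and m: "m < N" and mm: "m \<noteq> m'" and g: "0 < \<Gamma> m' m" unfolding EG_def by auto
  have "(srt x m', srt x m) \<in> Ep" unfolding Ep_def
    using TP_edge[OF x m' m mm g] srt_TN[OF x m'] srt_TN[OF x m] TP_srt[OF x m'] by auto
  with step(3) show ?case by simp
qed

lemma reach: assumes irr: "irreducible_Gamma N \<Gamma>" and p: "p \<in> TN N" and q: "q \<in> TN N"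
  shows "(p, q) \<in> Ep\<^sup>*"
proof -
  obtain j l where pj: "p = (j,l)" "j \<le> l" "l < N" using p unfolding TN_def by auto
  obtain j' l' where qj: "q = (j',l')" "j' \<le> l'" "l' < N" using q unfolding TN_def by auto
  have E: "(a, b) \<in> EG\<^sup>*" if "a < N" "b < N" for a b using irr that unfolding irreducible_Gamma_def EG_def by blast
  have "(srt j l, srt j j') \<in> Ep\<^sup>*" using move[OF E] pj qj by auto
  moreover have "(srt j' j, srt j' l') \<in> Ep\<^sup>*" using move[OF E] pj qj by auto
  ultimately have "(srt j l, srt j' l') \<in> Ep\<^sup>*" using srt_sym[of j j'] by simp
  thus ?thesis using pj qj srt_id by simp
qed

definition "aa i k = ThetaPsi N \<Gamma> \<Lambda> (dl (ts ! k)) (ts ! i)"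

lemma irr_idx: assumes irr: "irreducible_Gamma N \<Gamma>" and i: "i < nn" and k: "k < nn"
  shows "(i, k) \<in> {(i,k). i < nn \<and> k < nn \<and> i \<noteq> k \<and> 0 < aa i k}\<^sup>*"
proof -
  let ?E = "{(i,k). i < nn \<and> k < nn \<and> i \<noteq> k \<and> 0 < aa i k}"
  have tsi: "ts ! i \<in> TN N" "ts ! k \<in> TN N" using i k set_tn_list nth_mem by blast+
  have "(ts ! i, q) \<in> Ep\<^sup>* \<Longrightarrow> \<forall>k<nn. ts ! k = q \<longrightarrow> (i, k) \<in> ?E\<^sup>*" for q
  proof (induction rule: rtrancl_induct)
    case base
    show ?case
    proof (intro allI impI)
      fix k assume "k < nn" "ts ! k = ts ! i"
      hence "k = i" using i nth_eq_iff_index_eq[OF distinct_tn_list] by blast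
      thus "(i, k) \<in> ?E\<^sup>*" by simp
    qed
  next
    case (step q' q)
    from step(2) have q': "q' \<in> TN N" and "q \<in> TN N" and "q' \<noteq> q" and pos: "0 < ThetaPsi N \<Gamma> \<Lambda> (dl q) q'"
      unfolding Ep_def by auto
    obtain k' where k': "k' < nn" "ts ! k' = q'" using q' set_tn_list by (metis in_set_conv_nth)
    show ?case
    proof (intro allI impI)
      fix k assume k: "k < nn" "ts ! k = q"
      have "(i, k') \<in> ?E\<^sup>*" using step(3) k' by blast
      moreover have "(k', k) \<in> ?E" using k k' pos \<open>q' \<noteq> q\<close> unfolding aa_def by auto
      ultimately show "(i, k) \<in> ?E\<^sup>*" by (rule rtrancl.rtrancl_into_rtrancl)
    qed
  qed
  with reach[OF irr tsi] k show ?thesis by blast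
qed

lemma aa_sym: "i < nn \<Longrightarrow> k < nn \<Longrightarrow> aa i k = aa k i"
  unfolding aa_def using TP_dl_sym set_tn_list nth_mem by metis

lemma aa_metz: "i < nn \<Longrightarrow> k < nn \<Longrightarrow> i \<noteq> k \<Longrightarrow> 0 \<le> aa i k"
  unfolding aa_def using TP_dl_nonneg nth_mem set_tn_list nth_eq_iff_index_eq[OF distinct_tn_list]
  by metis

lemma nn_pos: "2 \<le> N \<Longrightarrow> 0 < nn"
proof -
  assume "2 \<le> N"
  hence "(0,0) \<in> set ts" unfolding set_tn_list TN_def by auto
  thus ?thesis by (cases ts) auto
qed

lemma symmetzler_inst: "2 \<le> N \<Longrightarrow> irreducible_Gamma N \<Gamma> \<Longrightarrow> symmetzler nn aa"
proof -
  assume N2: "2 \<le> N" and irr: "irreducible_Gamma N \<Gamma>"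
  show ?thesis
  proof
    show "0 < nn" using nn_pos[OF N2] .
  qed (auto intro: aa_sym aa_metz irr_idx[OF irr])
qed

end


lemma exp_neg_lim: "(c::real) < 0 \<Longrightarrow> ((\<lambda>z::real. exp (c * z)) \<longlongrightarrow> 0) at_top"
proof -
  assume c: "c < 0"
  have "filterlim (\<lambda>z. c * z) at_bot at_top"
    by (rule filterlim_tendsto_neg_mult_at_bot[OF tendsto_const c filterlim_ident])
  thus ?thesis by (rule filterlim_compose[OF exp_at_bot])
qed

lemma fm_mulvec: "i < n \<Longrightarrow> (fm n X *\<^sub>v vec n y) $ i = (\<Sum>j<n. X i j * y j)"
  unfolding fm_def by (simp add: scalar_prod_def row_def lessThan_atLeast0)

lemma charpoly_diag:
  fixes A P Q :: "'a::comm_ring_1 mat"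
  assumes A: "A \<in> carrier_mat n n" and P: "P \<in> carrier_mat n n" and Q: "Q \<in> carrier_mat n n"
    and PQ: "P * Q = 1\<^sub>m n" and QP: "Q * P = 1\<^sub>m n"
    and dec: "A = P * mat n n (\<lambda>(i,j). if i = j then d i else 0) * Q"
  shows "char_poly A = (\<Prod>k<n. [:- d k, 1:])"
proof -
  let ?D = "mat n n (\<lambda>(i,j). if i = j then d i else 0)"
  have D: "?D \<in> carrier_mat n n" by simp
  have "similar_mat A ?D" unfolding similar_mat_def similar_mat_wit_def
    using assms by (intro exI[of _ P] exI[of _ Q]) auto
  hence "char_poly A = char_poly ?D" by (rule char_poly_similar)
  also have "\<dots> = (\<Prod>a\<leftarrow>diag_mat ?D. [:- a, 1:])"
    by (rule char_poly_upper_triangular[OF D]) (auto simp: upper_triangular_def)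
  also have "diag_mat ?D = map d [0..<n]" unfolding diag_mat_def by auto
  also have "(\<Prod>a\<leftarrow>map d [0..<n]. [:- a, 1:]) = (\<Prod>k<n. [:- d k, 1:])"
    using prod.distinct_set_conv_list[of "[0..<n]" "\<lambda>k. [:- d k, 1:]"]
    by (simp add: lessThan_atLeast0 o_def)
  finally show ?thesis .
qed

primrec mpw :: "nat \<Rightarrow> (nat \<Rightarrow> nat \<Rightarrow> real) \<Rightarrow> nat \<Rightarrow> nat \<Rightarrow> nat \<Rightarrow> real" where
  "mpw n X 0 = idm"
| "mpw n X (Suc k) = mm n (mpw n X k) X"

lemma dim_row_fm[simp]: "dim_row (fm n X) = n" and dim_col_fm[simp]: "dim_col (fm n X) = n"
  unfolding fm_def by simp_all

lemma ifz_mult[simp]: "(if P then x else (0::real)) * y = (if P then x * y else 0)" by simp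
lemma mult_ifz[simp]: "y * (if P then x else (0::real)) = (if P then y * x else 0)" by simp

lemma fm_pow: "fm n X ^\<^sub>m k = fm n (mpw n X k)"
  by (induction k) (auto simp: fm_mm fm_idm)

lemma mm_dg_dg: "eqn n (mm n (dg f) (dg g)) (dg (\<lambda>i. f i * g i))"
  unfolding eqn_def mm_def dg_def by (auto simp: sum.delta)

context symmetzler begin

context
  fixes U es w l k0
  assumes orth: "eqn n (mm n (tr U) U) idm" and eig: "eqn n (mm n a U) (mm n U (dg es))"
    and k0: "k0 < n" and esk0: "es k0 = l" and esl: "\<And>k. k < n \<Longrightarrow> k \<noteq> k0 \<Longrightarrow> es k < l"
    and wpos: "\<And>i. i < n \<Longrightarrow> 0 < w i" and w1: "(\<Sum>i<n. (w i)\<^sup>2) = 1"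
    and Uk0: "\<And>i. i < n \<Longrightarrow> U i k0 = w i"
    and wev: "\<And>i. i < n \<Longrightarrow> (\<Sum>j<n. a i j * w j) = l * w i"
begin

lemma compl': "eqn n (mm n U (tr U)) idm" by (rule orth_complete[OF orth])

lemma a_decomp: "eqn n a (mm n U (mm n (dg es) (tr U)))"
proof -
  have "eqn n a (mm n a idm)" by (rule eqn_sym[OF mm_idm_right])
  moreover have "eqn n (mm n a idm) (mm n a (mm n U (tr U)))" by (rule eqn_mm_left[OF eqn_sym[OF compl']])
  moreover have "mm n a (mm n U (tr U)) = mm n (mm n a U) (tr U)" by (simp add: mm_assoc)
  moreover have "eqn n (mm n (mm n a U) (tr U)) (mm n (mm n U (dg es)) (tr U))" by (rule eqn_mm_right[OF eig])
  moreover have "mm n (mm n U (dg es)) (tr U) = mm n U (mm n (dg es) (tr U))" by (simp add: mm_assoc)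
  ultimately show ?thesis using eqn_trans by metis
qed

lemma fm_dg: "fm n (dg f) = mat n n (\<lambda>(i,j). if i = j then f i else 0)"
  unfolding fm_def dg_def by (rule eq_matI) auto

lemma mat_dec: "fm n a = fm n U * mat n n (\<lambda>(i,j). if i = j then es i else 0) * fm n (tr U)"
  using a_decomp unfolding fm_eq fm_mm fm_dg[symmetric] by (simp add: assoc_mult_mat[of _ n n _ n _ n])

lemma PQ: "fm n U * fm n (tr U) = 1\<^sub>m n" using compl' unfolding fm_eq fm_mm fm_idm .
lemma QP: "fm n (tr U) * fm n U = 1\<^sub>m n" using orth unfolding fm_eq fm_mm fm_idm .

lemma charpoly: "char_poly (fm n a) = (\<Prod>k<n. [:- es k, 1:])"
  by (rule charpoly_diag[OF fm_carrier fm_carrier fm_carrier PQ QP mat_dec])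

lemma order1: "order l (char_poly (fm n a)) = 1"
proof -
  define K where "K = {..<n} - {k0}"
  define q where "q = (\<Prod>k\<in>K. [:- es k, 1:])"
  have fK: "finite K" unfolding K_def by simp
  have cp: "char_poly (fm n a) = [:- l, 1:] * q"
    unfolding charpoly q_def K_def using k0 esk0 by (simp add: prod.remove)
  have pq: "poly q l \<noteq> 0" unfolding q_def poly_prod using esl fK unfolding K_def by auto
  hence q0: "q \<noteq> 0" by auto
  have "order l (char_poly (fm n a)) = order l [:- l, 1:] + order l q"
    unfolding cp by (rule order_mult, rule no_zero_divisors[OF _ q0], simp)
  also have "\<dots> = 1" using order_0I[OF pq] by (simp add: order_linear)
  finally show ?thesis .
qed

lemma complex_ev: assumes "eigenvalue (map_mat complex_of_real (fm n a)) ev" shows "Re ev \<le> l"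
proof -
  let ?h = "map_mat complex_of_real"
  have hA: "?h (fm n a) = ?h (fm n U) * mat n n (\<lambda>(i,j). if i = j then complex_of_real (es i) else 0) * ?h (fm n (tr U))"
  proof -
    have "?h (fm n a) = ?h (fm n U) * ?h (mat n n (\<lambda>(i,j). if i = j then es i else 0)) * ?h (fm n (tr U))"
      unfolding mat_dec
      by (subst of_real_hom.mat_hom_mult[of _ n n _ n], force, force,
          subst of_real_hom.mat_hom_mult[of _ n n _ n], auto)
    also have "?h (mat n n (\<lambda>(i,j). if i = j then es i else 0)) = mat n n (\<lambda>(i,j). if i = j then complex_of_real (es i) else 0)"
      by (rule eq_matI) auto
    finally show ?thesis .
  qed
  have "?h (fm n U) * ?h (fm n (tr U)) = ?h (fm n U * fm n (tr U))"
    by (rule of_real_hom.mat_hom_mult[symmetric, of _ n n _ n]) auto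
  also have "\<dots> = 1\<^sub>m n" by (simp add: PQ of_real_hom.mat_hom_one)
  finally have 1: "?h (fm n U) * ?h (fm n (tr U)) = 1\<^sub>m n" .
  have "?h (fm n (tr U)) * ?h (fm n U) = ?h (fm n (tr U) * fm n U)"
    by (rule of_real_hom.mat_hom_mult[symmetric, of _ n n _ n]) auto
  also have "\<dots> = 1\<^sub>m n" by (simp add: QP of_real_hom.mat_hom_one)
  finally have 2: "?h (fm n (tr U)) * ?h (fm n U) = 1\<^sub>m n" .
  have cp: "char_poly (?h (fm n a)) = (\<Prod>k<n. [:- complex_of_real (es k), 1:])"
    using 1 2 by (intro charpoly_diag[OF _ _ _ _ _ hA]) auto
  have "poly (char_poly (?h (fm n a))) ev = 0"
    using assms eigenvalue_root_char_poly[of "?h (fm n a)" n] by simp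
  hence "(\<Prod>k<n. ev - complex_of_real (es k)) = 0" unfolding cp poly_prod by simp
  then obtain k where k: "k < n" "ev = complex_of_real (es k)" by auto
  show ?thesis using k esl esk0 by (cases "k = k0") (auto simp: less_imp_le)
qed

lemma eigval: "eigenvalue (fm n a) l"
proof -
  have "vec n w \<noteq> 0\<^sub>v n"
  proof
    assume "vec n w = 0\<^sub>v n"
    hence "vec n w $ 0 = 0\<^sub>v n $ 0" by simp
    thus False using wpos[OF npos] npos by simp
  qed
  moreover have "fm n a *\<^sub>v vec n w = l \<cdot>\<^sub>v vec n w"
  proof (rule eq_vecI)
    fix i assume "i < dim_vec (l \<cdot>\<^sub>v vec n w)"
    hence i: "i < n" by simp
    show "(fm n a *\<^sub>v vec n w) $ i = (l \<cdot>\<^sub>v vec n w) $ i"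
      unfolding fm_mulvec[OF i] wev[OF i] using i by simp
  qed simp
  ultimately show ?thesis unfolding eigenvalue_def eigenvector_def by (intro exI[of _ "vec n w"]) simp
qed

lemma mpw_dec: "eqn n (mpw n a k) (mm n U (mm n (dg (\<lambda>p. es p ^ k)) (tr U)))"
proof (induction k)
  case 0
  have "dg (\<lambda>p. es p ^ 0) = idm" unfolding dg_def idm_def by (intro ext) simp
  hence "mm n U (mm n (dg (\<lambda>p. es p ^ 0)) (tr U)) = mm n (mm n U idm) (tr U)" by (simp add: mm_assoc)
  moreover have "eqn n (mm n (mm n U idm) (tr U)) idm"
    by (rule eqn_trans[OF eqn_mm_right[OF mm_idm_right] compl'])
  ultimately show ?case by (simp add: eqn_sym)
next
  case (Suc k)
  let ?Dk = "dg (\<lambda>p. es p ^ k)"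
  have "eqn n (mpw n a (Suc k)) (mm n (mm n U (mm n ?Dk (tr U))) (mm n U (mm n (dg es) (tr U))))"
    unfolding mpw.simps by (rule eqn_mm[OF Suc.IH a_decomp])
  moreover have "mm n (mm n U (mm n ?Dk (tr U))) (mm n U (mm n (dg es) (tr U)))
      = mm n U (mm n ?Dk (mm n (mm n (tr U) U) (mm n (dg es) (tr U))))" by (simp add: mm_assoc)
  moreover have "eqn n (mm n U (mm n ?Dk (mm n (mm n (tr U) U) (mm n (dg es) (tr U)))))
       (mm n U (mm n ?Dk (mm n (dg es) (tr U))))"
    by (intro eqn_mm_left eqn_trans[OF eqn_mm_right[OF orth] mm_idm_left])
  moreover have "mm n U (mm n ?Dk (mm n (dg es) (tr U))) = mm n U (mm n (mm n ?Dk (dg es)) (tr U))"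
    by (simp add: mm_assoc)
  moreover have "eqn n (mm n U (mm n (mm n ?Dk (dg es)) (tr U))) (mm n U (mm n (dg (\<lambda>p. es p ^ Suc k)) (tr U)))"
    by (intro eqn_mm_left eqn_mm_right) (rule eqn_trans[OF mm_dg_dg], simp add: eqn_def mult.commute)
  ultimately show ?case using eqn_trans by metis
qed

definition "cc v p = (\<Sum>j<n. U j p * v j)"

lemma pow_apply: assumes i: "i < n"
  shows "((fm n a ^\<^sub>m k) *\<^sub>v vec n v) $ i = (\<Sum>p<n. U i p * es p ^ k * cc v p)"
proof -
  have "((fm n a ^\<^sub>m k) *\<^sub>v vec n v) $ i = (\<Sum>j<n. mpw n a k i j * v j)"
    unfolding fm_pow using i by (rule fm_mulvec)
  also have "\<dots> = (\<Sum>j<n. (\<Sum>p<n. U i p * es p ^ k * U j p) * v j)"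
  proof (intro sum.cong refl)
    fix j assume "j \<in> {..<n}"
    hence j: "j < n" by simp
    have "mpw n a k i j = mm n U (mm n (dg (\<lambda>p. es p ^ k)) (tr U)) i j" by (rule eqnD[OF mpw_dec i j])
    also have "\<dots> = (\<Sum>p<n. U i p * es p ^ k * U j p)"
      unfolding mm_def dg_def tr_def by (simp add: sum.delta mult.assoc)
    finally show "mpw n a k i j * v j = (\<Sum>p<n. U i p * es p ^ k * U j p) * v j" by simp
  qed
  also have "\<dots> = (\<Sum>p<n. \<Sum>j<n. U i p * es p ^ k * U j p * v j)"
    by (simp add: sum_distrib_right) (rule sum.swap)
  also have "\<dots> = (\<Sum>p<n. U i p * es p ^ k * cc v p)"
    unfolding cc_def by (simp add: sum_distrib_left mult.assoc)
  finally show ?thesis .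
qed

lemma mexp_val: assumes i: "i < n"
  shows "mexp_apply (fm n a) z (vec n v) $ i = (\<Sum>p<n. U i p * cc v p * exp (es p * z))"
proof -
  have "(\<lambda>k. z ^ k / fact k * ((fm n a ^\<^sub>m k) *\<^sub>v vec n v) $ i)
      = (\<lambda>k. \<Sum>p<n. U i p * cc v p * ((es p * z) ^ k /\<^sub>R fact k))"
    by (intro ext) (simp add: pow_apply[OF i] sum_distrib_left power_mult_distrib field_simps)
  moreover have "(\<lambda>k. \<Sum>p<n. U i p * cc v p * ((es p * z) ^ k /\<^sub>R fact k)) sums (\<Sum>p<n. U i p * cc v p * exp (es p * z))"
    by (intro sums_sum sums_mult exp_converges)
  ultimately have "(\<lambda>k. z ^ k / fact k * ((fm n a ^\<^sub>m k) *\<^sub>v vec n v) $ i) sums (\<Sum>p<n. U i p * cc v p * exp (es p * z))"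
    by simp
  hence "(\<Sum>k. z ^ k / fact k * ((fm n a ^\<^sub>m k) *\<^sub>v vec n v) $ i) = (\<Sum>p<n. U i p * cc v p * exp (es p * z))"
    by (rule sums_unique[symmetric])
  thus ?thesis unfolding mexp_apply_def using i by (simp add: fm_def)
qed

lemma limit: assumes i: "i < n" and C: "(\<Sum>j<n. w j * v j) \<noteq> 0"
  shows "((\<lambda>z. mexp_apply (fm n a) z (vec n v) $ i / ((\<Sum>j<n. w j * v j) * w i * exp (l * z))) \<longlongrightarrow> 1) at_top"
proof -
  define C where "C = (\<Sum>j<n. w j * v j)"
  have ck0: "cc v k0 = C" unfolding cc_def C_def using Uk0 by simp
  have wi: "w i \<noteq> 0" using wpos[OF i] by simp
  have C0: "C \<noteq> 0" using C unfolding C_def .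
  have eq: "mexp_apply (fm n a) z (vec n v) $ i / (C * w i * exp (l * z))
     = (\<Sum>p<n. (U i p * cc v p / (C * w i)) * exp ((es p - l) * z))" for z
    unfolding mexp_val[OF i] sum_divide_distrib
    by (intro sum.cong refl) (simp add: exp_diff left_diff_distrib field_simps)
  have "((\<lambda>z. \<Sum>p<n. (U i p * cc v p / (C * w i)) * exp ((es p - l) * z)) \<longlongrightarrow>
        (\<Sum>p<n. (U i p * cc v p / (C * w i)) * (if p = k0 then 1 else 0))) at_top"
  proof (intro tendsto_sum tendsto_mult tendsto_const)
    fix p assume "p \<in> {..<n}"
    show "((\<lambda>z. exp ((es p - l) * z)) \<longlongrightarrow> (if p = k0 then 1 else 0)) at_top"
    proof (cases "p = k0")
      case True then show ?thesis using esk0 by simp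
    next
      case False
      hence "es p - l < 0" using esl \<open>p \<in> {..<n}\<close> by auto
      then show ?thesis using False exp_neg_lim by simp
    qed
  qed
  moreover have "(\<Sum>p<n. (U i p * cc v p / (C * w i)) * (if p = k0 then 1 else 0)) = 1"
    using k0 Uk0[OF i] ck0 C0 wi by (simp add: if_distrib sum.delta' cong: if_cong)
  ultimately show ?thesis unfolding C_def[symmetric] eq by simp
qed

end

end


lemma TN_reindex: "(\<Sum>p\<in>TN N. f p) = (\<Sum>k<length (tn_list N). f (tn_list N ! k))"
proof -
  have "TN N = (\<lambda>k. tn_list N ! k) ` {..<length (tn_list N)}"
    unfolding set_tn_list[symmetric] by (auto simp: set_conv_nth)
  moreover have "inj_on (\<lambda>k. tn_list N ! k) {..<length (tn_list N)}"
    using nth_eq_iff_index_eq[OF distinct_tn_list] by (auto simp: inj_on_def)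
  ultimately show ?thesis by (simp add: sum.reindex)
qed

lemma q_identity:
  "(\<Sum>p \<in> TN N. W p * ((2 - (if fst p = snd p then 1 else 0)) * q (fst p) * q (snd p)))
     = (\<Sum>j < N. \<Sum>l < N. sv W j l * q j * q l)"
proof -
  define h where "h j l = sv W j l * q j * q l" for j l
  have hs: "h j l = h l j" for j l unfolding h_def using sv_sym[of W j l] by simp
  have "(\<Sum>p \<in> TN N. W p * ((2 - (if fst p = snd p then 1 else 0)) * q (fst p) * q (snd p)))
      = (\<Sum>p \<in> TN N. 2 * h (fst p) (snd p) - (if fst p = snd p then h (fst p) (snd p) else 0))"
  proof (intro sum.cong refl)
    fix p assume "p \<in> TN N"
    hence "W p = sv W (fst p) (snd p)" by (rule TN_sv)
    thus "W p * ((2 - (if fst p = snd p then 1 else 0)) * q (fst p) * q (snd p))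
        = 2 * h (fst p) (snd p) - (if fst p = snd p then h (fst p) (snd p) else 0)"
      unfolding h_def by (simp add: algebra_simps)
  qed
  also have "\<dots> = 2 * (\<Sum>p \<in> TN N. h (fst p) (snd p)) - (\<Sum>p \<in> TN N. if fst p = snd p then h (fst p) (snd p) else 0)"
    by (simp add: sum_subtractf sum_distrib_left)
  also have "(\<Sum>p \<in> TN N. if fst p = snd p then h (fst p) (snd p) else 0) = (\<Sum>j<N. h j j)"
  proof -
    have "(\<Sum>p \<in> TN N. if fst p = snd p then h (fst p) (snd p) else 0) = (\<Sum>p \<in> {p \<in> TN N. fst p = snd p}. h (fst p) (snd p))"
      by (rule sum.inter_filter[symmetric]) simp
    also have "{p \<in> TN N. fst p = snd p} = (\<lambda>j. (j,j)) ` {..<N}" unfolding TN_def by auto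
    also have "(\<Sum>p \<in> (\<lambda>j. (j,j)) ` {..<N}. h (fst p) (snd p)) = (\<Sum>j<N. h j j)"
      by (subst sum.reindex) (auto simp: inj_on_def)
    finally show ?thesis .
  qed
  also have "2 * (\<Sum>p \<in> TN N. h (fst p) (snd p)) = (\<Sum>j<N. \<Sum>l<N. h j l) + (\<Sum>j<N. h j j)"
    by (rule TN_sum2) (rule hs)
  finally show ?thesis unfolding h_def by simp
qed

theorem mainTheorem5:
  fixes N :: nat and \<Gamma> :: "nat \<Rightarrow> nat \<Rightarrow> real" and \<Lambda> :: "nat \<Rightarrow> real"
  assumes N2: "N \<ge> 2"
    and sym: "\<And>j l. j < N \<Longrightarrow> l < N \<Longrightarrow> \<Gamma> j l = \<Gamma> l j"
    and offdiag: "\<And>j l. j < N \<Longrightarrow> l < N \<Longrightarrow> j \<noteq> l \<Longrightarrow> \<Gamma> j l \<ge> 0"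
    and diag: "\<And>j. j < N \<Longrightarrow> \<Gamma> j j = - (\<Sum>l \<in> {0..<N} - {j}. \<Gamma> j l)"
    and Lpos: "\<And>j. j < N \<Longrightarrow> \<Lambda> j \<ge> 0"
    and irr: "irreducible_Gamma N \<Gamma>"
  shows "\<exists>\<mu> :: real.
     eigenvalue (ThetaPsi_mat N \<Gamma> \<Lambda>) (- \<mu>)
   \<and> (\<forall>ev :: complex. eigenvalue (map_mat complex_of_real (ThetaPsi_mat N \<Gamma> \<Lambda>)) ev \<longrightarrow> Re ev \<le> - \<mu>)
   \<and> order (- \<mu>) (char_poly (ThetaPsi_mat N \<Gamma> \<Lambda>)) = 1
   \<and> (\<exists>W :: nat \<times> nat \<Rightarrow> real.
        (\<forall>p \<in> TN N. ThetaPsi N \<Gamma> \<Lambda> W p = - \<mu> * W p) \<and> (\<forall>p \<in> TN N. W p > 0)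
        \<and> (\<Sum>p \<in> TN N. (W p)\<^sup>2) = 1)
   \<and> (\<forall>W :: nat \<times> nat \<Rightarrow> real.
        (\<forall>p \<in> TN N. ThetaPsi N \<Gamma> \<Lambda> W p = - \<mu> * W p) \<and> (\<forall>p \<in> TN N. W p > 0)
        \<and> (\<Sum>p \<in> TN N. (W p)\<^sup>2) = 1 \<longrightarrow>
        (\<forall>S0 :: nat \<times> nat \<Rightarrow> real.
           (\<forall>p \<in> TN N. S0 p \<ge> 0) \<and> (\<exists>p \<in> TN N. S0 p \<noteq> 0) \<longrightarrow>
           (let cW = (\<Sum>p \<in> TN N. W p * S0 p);
                S = (\<lambda>z. mexp_apply (ThetaPsi_mat N \<Gamma> \<Lambda>) z (vec_of_TN N S0))
            in cW > 0 \<and>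
               (\<forall>i < length (tn_list N).
                  ((\<lambda>z. (S z $ i) / (cW * W (tn_list N ! i) * exp (- \<mu> * z))) \<longlongrightarrow> 1) at_top)))
        \<and> (\<forall>q :: nat \<Rightarrow> real.
           (\<forall>j < N. q j \<ge> 0) \<and> (\<exists>j < N. q j \<noteq> 0) \<longrightarrow>
           (\<Sum>p \<in> TN N. W p * ((2 - (if fst p = snd p then 1 else 0)) * q (fst p) * q (snd p)))
             = (\<Sum>j < N. \<Sum>l < N. sv W j l * q j * q l)))"
proof -
  interpret G: gam N \<Gamma> \<Lambda> using sym offdiag diag by unfold_locales auto
  interpret S: symmetzler "length (tn_list N)" G.aa by (rule G.symmetzler_inst[OF N2 irr])
  let ?n = "length (tn_list N)"
  let ?ts = "tn_list N"
  obtain U es w l k0 where orth: "eqn ?n (mm ?n (tr U) U) idm" and eig: "eqn ?n (mm ?n G.aa U) (mm ?n U (dg es))"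
     and k0: "k0 < ?n" and esk0: "es k0 = l" and esl': "\<forall>k<?n. k \<noteq> k0 \<longrightarrow> es k < l"
     and wpos': "\<forall>i<?n. 0 < w i" and w1: "(\<Sum>i<?n. (w i)\<^sup>2) = 1" and Uk0': "\<forall>i<?n. U i k0 = w i"
     and wev': "\<forall>i<?n. (\<Sum>j<?n. G.aa i j * w j) = l * w i"
    using S.perron by blast
  have esl: "\<And>k. k < ?n \<Longrightarrow> k \<noteq> k0 \<Longrightarrow> es k < l" using esl' by blast
  have wpos: "\<And>i. i < ?n \<Longrightarrow> 0 < w i" using wpos' by blast
  have Uk0: "\<And>i. i < ?n \<Longrightarrow> U i k0 = w i" using Uk0' by blast
  have wev: "\<And>i. i < ?n \<Longrightarrow> (\<Sum>j<?n. G.aa i j * w j) = l * w i" using wev' by blast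
  note facts = orth eig k0 esk0 esl wpos w1 Uk0 wev
  have A: "ThetaPsi_mat N \<Gamma> \<Lambda> = fm ?n G.aa"
    unfolding ThetaPsi_mat_def Let_def fm_def G.aa_def dl_def by simp
  have lin: "ThetaPsi N \<Gamma> \<Lambda> S (?ts ! i) = (\<Sum>k<?n. G.aa i k * S (?ts ! k))" if i: "i < ?n" for S i
  proof -
    have "?ts ! i \<in> TN N" using i set_tn_list nth_mem by blast
    from G.TP_linear[OF this, of S] show ?thesis unfolding G.aa_def .
  qed
  have tsTN: "?ts ! i \<in> TN N" if "i < ?n" for i using that set_tn_list nth_mem by blast
  have TNts: "\<exists>i<?n. p = ?ts ! i" if "p \<in> TN N" for p using that set_tn_list by (metis in_set_conv_nth)
  have tsinj: "?ts ! i = ?ts ! k \<longleftrightarrow> i = k" if "i < ?n" "k < ?n" for i k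
    using nth_eq_iff_index_eq[OF distinct_tn_list that] .
  define W0 where "W0 p = (\<Sum>k<?n. if ?ts ! k = p then w k else 0)" for p
  have W0ts: "W0 (?ts ! i) = w i" if i: "i < ?n" for i
  proof -
    have "W0 (?ts ! i) = (\<Sum>k<?n. if k = i then w k else 0)" unfolding W0_def
      by (intro sum.cong refl) (use tsinj i in auto)
    thus ?thesis using i by simp
  qed
  have exW: "\<exists>W :: nat \<times> nat \<Rightarrow> real.
        (\<forall>p \<in> TN N. ThetaPsi N \<Gamma> \<Lambda> W p = - (- l) * W p) \<and> (\<forall>p \<in> TN N. W p > 0)
        \<and> (\<Sum>p \<in> TN N. (W p)\<^sup>2) = 1"
  proof (intro exI[of _ W0] conjI ballI)
    fix p assume "p \<in> TN N"
    then obtain i where i: "i < ?n" "p = ?ts ! i" using TNts by blast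
    have "ThetaPsi N \<Gamma> \<Lambda> W0 p = (\<Sum>k<?n. G.aa i k * w k)" unfolding i(2) lin[OF i(1)]
      by (intro sum.cong refl) (simp add: W0ts)
    thus "ThetaPsi N \<Gamma> \<Lambda> W0 p = - (- l) * W0 p" using wev[OF i(1)] W0ts[OF i(1)] i by simp
    show "W0 p > 0" using i W0ts wpos by simp
  next
    show "(\<Sum>p \<in> TN N. (W0 p)\<^sup>2) = 1" unfolding TN_reindex using W0ts w1 by simp
  qed
  have Wchar: "W (?ts ! k) = w k" if H: "(\<forall>p \<in> TN N. ThetaPsi N \<Gamma> \<Lambda> W p = - (- l) * W p) \<and> (\<forall>p \<in> TN N. W p > 0)
        \<and> (\<Sum>p \<in> TN N. (W p)\<^sup>2) = 1" and k: "k < ?n" for W k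
  proof -
    define y where "y k = W (?ts ! k)" for k
    have yev: "(\<Sum>k<?n. G.aa i k * y k) = l * y i" if i: "i < ?n" for i
      using H tsTN[OF i] lin[OF i, of W] unfolding y_def by simp
    obtain c where c: "\<forall>i<?n. y i = c * w i" using S.unique_vec[OF wpos wev yev] by blast
    have k0pos: "0 < y k0" using H tsTN[OF k0] unfolding y_def by simp
    hence cpos: "0 < c" using c k0 wpos[OF k0] by (simp add: zero_less_mult_iff)
    have "1 = (\<Sum>k<?n. (y k)\<^sup>2)" using H unfolding TN_reindex y_def by simp
    also have "\<dots> = (\<Sum>k<?n. c\<^sup>2 * (w k)\<^sup>2)" using c by (intro sum.cong refl) (simp add: power_mult_distrib)
    also have "\<dots> = c\<^sup>2" using w1 by (simp add: sum_distrib_left[symmetric])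
    finally have "c = 1" using cpos by (metis power2_eq_1_iff not_one_less_zero less_trans neg_0_less_iff_less zero_less_one)
    thus ?thesis using c k unfolding y_def by simp
  qed
  have allW: "\<forall>W :: nat \<times> nat \<Rightarrow> real.
        (\<forall>p \<in> TN N. ThetaPsi N \<Gamma> \<Lambda> W p = - (- l) * W p) \<and> (\<forall>p \<in> TN N. W p > 0)
        \<and> (\<Sum>p \<in> TN N. (W p)\<^sup>2) = 1 \<longrightarrow>
        (\<forall>S0 :: nat \<times> nat \<Rightarrow> real.
           (\<forall>p \<in> TN N. S0 p \<ge> 0) \<and> (\<exists>p \<in> TN N. S0 p \<noteq> 0) \<longrightarrow>
           (let cW = (\<Sum>p \<in> TN N. W p * S0 p);
                S = (\<lambda>z. mexp_apply (ThetaPsi_mat N \<Gamma> \<Lambda>) z (vec_of_TN N S0))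
            in cW > 0 \<and>
               (\<forall>i < length (tn_list N).
                  ((\<lambda>z. (S z $ i) / (cW * W (tn_list N ! i) * exp (- (- l) * z))) \<longlongrightarrow> 1) at_top)))
        \<and> (\<forall>q :: nat \<Rightarrow> real.
           (\<forall>j < N. q j \<ge> 0) \<and> (\<exists>j < N. q j \<noteq> 0) \<longrightarrow>
           (\<Sum>p \<in> TN N. W p * ((2 - (if fst p = snd p then 1 else 0)) * q (fst p) * q (snd p)))
             = (\<Sum>j < N. \<Sum>l < N. sv W j l * q j * q l))"
  proof (intro allI impI conjI)
      fix W :: "nat \<times> nat \<Rightarrow> real" and S0 :: "nat \<times> nat \<Rightarrow> real"
      assume H: "(\<forall>p \<in> TN N. ThetaPsi N \<Gamma> \<Lambda> W p = - (- l) * W p) \<and> (\<forall>p \<in> TN N. W p > 0)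
        \<and> (\<Sum>p \<in> TN N. (W p)\<^sup>2) = 1"
      assume HS: "(\<forall>p \<in> TN N. S0 p \<ge> 0) \<and> (\<exists>p \<in> TN N. S0 p \<noteq> 0)"
      have Wts: "W (?ts ! k) = w k" if "k < ?n" for k using Wchar[OF H that] .
      define v where "v k = S0 (?ts ! k)" for k
      have cW: "(\<Sum>p \<in> TN N. W p * S0 p) = (\<Sum>j<?n. w j * v j)"
        unfolding TN_reindex v_def by (intro sum.cong refl) (simp add: Wts)
      obtain p where p: "p \<in> TN N" "S0 p \<noteq> 0" using HS by blast
      then obtain i0 where i0: "i0 < ?n" "p = ?ts ! i0" using TNts by blast
      have "0 < (\<Sum>j<?n. w j * v j)"
      proof (rule sum_pos2[of _ i0])
        show "0 < w i0 * v i0" using wpos[OF i0(1)] HS p i0 unfolding v_def by (simp add: less_le)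
        show "\<And>j. j \<in> {..<?n} \<Longrightarrow> 0 \<le> w j * v j" using wpos HS tsTN unfolding v_def by (simp add: less_imp_le)
      qed (use i0 in auto)
      moreover have "((\<lambda>z. mexp_apply (ThetaPsi_mat N \<Gamma> \<Lambda>) z (vec_of_TN N S0) $ i /
           ((\<Sum>j<?n. w j * v j) * W (?ts ! i) * exp (- (- l) * z))) \<longlongrightarrow> 1) at_top" if i: "i < ?n" for i
        using S.limit[OF facts i, of v] \<open>0 < (\<Sum>j<?n. w j * v j)\<close> Wts[OF i]
        unfolding A vec_of_TN_def v_def by simp
      ultimately show "let cW = (\<Sum>p \<in> TN N. W p * S0 p);
                S = (\<lambda>z. mexp_apply (ThetaPsi_mat N \<Gamma> \<Lambda>) z (vec_of_TN N S0))
            in cW > 0 \<and>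
               (\<forall>i < length (tn_list N).
                  ((\<lambda>z. (S z $ i) / (cW * W (tn_list N ! i) * exp (- (- l) * z))) \<longlongrightarrow> 1) at_top)"
        unfolding Let_def cW by blast
  next
    fix W :: "nat \<times> nat \<Rightarrow> real" and q :: "nat \<Rightarrow> real"
    show "(\<Sum>p \<in> TN N. W p * ((2 - (if fst p = snd p then 1 else 0)) * q (fst p) * q (snd p)))
             = (\<Sum>j < N. \<Sum>l < N. sv W j l * q j * q l)" by (rule q_identity)
  qed
  have ev: "eigenvalue (ThetaPsi_mat N \<Gamma> \<Lambda>) (- (- l))" unfolding A using S.eigval[OF facts] by simp
  have cev: "\<forall>ev :: complex. eigenvalue (map_mat complex_of_real (ThetaPsi_mat N \<Gamma> \<Lambda>)) ev \<longrightarrow> Re ev \<le> - (- l)"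
    unfolding A using S.complex_ev[OF facts] by simp
  have ord: "order (- (- l)) (char_poly (ThetaPsi_mat N \<Gamma> \<Lambda>)) = 1" unfolding A using S.order1[OF facts] by simp
  show ?thesis by (rule exI[of _ "- l"]) (use ev cev ord exW allW in blast)
qed


end
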